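(* Let $\nu=(\nu_1,\dots,\nu_\ell)$ be an integer partition. Then there exist rational numbers $\xi_\delta$, indexed by integer partitions $\delta$ with $|\delta|\le|\nu|-1$, such that for every strict partition $\lambda$, $$D\Bigl(\frac{q_\nu(\lambda)}{H_\lambda}\Bigr)=\sum_{|\delta|\le|\nu|-1}\xi_\delta\,\frac{q_\delta(\lambda)}{H_\lambda}.$$
   Context: A strict partition is a finite strictly decreasing sequence of positive integers $\lambda=(\lambda_1>\cdots>\lambda_\ell)$ (the empty sequence is allowed); $\ell(\lambda)=\ell$, and $\lambda_i=0$ for $i>\ell(\lambda)$. The (shifted Young) diagram of $\lambda$ is the set of boxes $(i,j)$ with $1\le i\le\ell(\lambda)$, $i+1\le j\le i+\lambda_i$ (row $i$, column $j$); $\lambda$ is identified with its diagram. The hook length $h_\square$ of $\square=(i,j)\in\lambda$ is the number of boxes of $\lambda$ in row $i$ strictly to the right of $\square$, plus the number of boxes $(i',j)\in\lambda$ with $i'>i$, plus $1$, plus $\lambda_j$; $H_\lambda=\prod_{\square\in\lambda}h_\square$ ($H_\emptyset=1$). An outer corner of $\lambda$ is a box of $\lambda$ whose removal leaves the diagram of a strict partition. Let $(\alpha_1,\beta_1),\dots,(\alpha_m,\beta_m)$ be the outer corners with $\alpha_1>\cdots>\alpha_m$, and $y_j=\beta_j-\alpha_j$. Set $\alpha_{m+1}=0$, $\beta_0=\ell(\lambda)+1$, and $x_i=\beta_i-\alpha_{i+1}$ for $0\le i\le m$. For $k\ge0$, $q_k(\lambda)=\sum_{i=0}^m\binom{x_i}{2}^k-\sum_{i=1}^m\binom{y_i}{2}^k$,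 and for an integer partition $\nu=(\nu_1,\dots,\nu_\ell)$, $q_\nu(\lambda)=\prod_{j=1}^\ell q_{\nu_j}(\lambda)$ ($q_\emptyset=1$). $\lambda^+$ ranges over strict partitions obtained from $\lambda$ by adding one box; the difference operator is $DG(\lambda)=\sum_{\lambda^+:\ell(\lambda^+)>\ell(\lambda)}G(\lambda^+)+2\sum_{\lambda^+:\ell(\lambda^+)=\ell(\lambda)}G(\lambda^+)-G(\lambda)$. *)

theory Defs
  imports Complex_Main
begin

definition strict_partition :: "nat list \<Rightarrow> bool" where
  "strict_partition lam \<longleftrightarrow> sorted_wrt (>) lam \<and> (\<forall>x\<in>set lam. 0 < x)"

definition int_partition :: "nat list \<Rightarrow> bool" where
  "int_partition nu \<longleftrightarrow> sorted_wrt (\<ge>) nu \<and> (\<forall>x\<in>set nu. 0 < x)"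

text \<open>1-indexed parts, with lambda_i = 0 for i > length.\<close>
definition part :: "nat list \<Rightarrow> nat \<Rightarrow> nat" where
  "part lam i = (if 1 \<le> i \<and> i \<le> length lam then lam ! (i - 1) else 0)"

definition diagram :: "nat list \<Rightarrow> (nat \<times> nat) set" where
  "diagram lam = {(i, j). 1 \<le> i \<and> i \<le> length lam \<and> i + 1 \<le> j \<and> j \<le> i + part lam i}"

definition hook :: "nat list \<Rightarrow> nat \<times> nat \<Rightarrow> nat" where
  "hook lam b = (case b of (i, j) \<Rightarrow>
      card {j'. (i, j') \<in> diagram lam \<and> j' > j}
    + card {i'. (i', j) \<in> diagram lam \<and> i' > i}
    + 1 + part lam j)"

definition H :: "nat list \<Rightarrow> rat" where
  "H lam = (\<Prod>b\<in>diagram lam. of_nat (hook lam b))"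

definition outer_corners :: "nat list \<Rightarrow> (nat \<times> nat) set" where
  "outer_corners lam = {b \<in> diagram lam. \<exists>mu. strict_partition mu \<and> diagram mu = diagram lam - {b}}"

definition corner_rows :: "nat list \<Rightarrow> nat list" where
  "corner_rows lam = rev (sorted_list_of_set (fst ` outer_corners lam))"

definition n_corners :: "nat list \<Rightarrow> nat" where
  "n_corners lam = card (outer_corners lam)"

definition alpha :: "nat list \<Rightarrow> nat \<Rightarrow> int" where
  "alpha lam i = (if 1 \<le> i \<and> i \<le> n_corners lam then int (corner_rows lam ! (i - 1)) else 0)"

definition beta :: "nat list \<Rightarrow> nat \<Rightarrow> int" where
  "beta lam i = (if i = 0 then int (length lam) + 1
     else int (THE j. (corner_rows lam ! (i - 1), j) \<in> outer_corners lam))"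

definition xcoord :: "nat list \<Rightarrow> nat \<Rightarrow> int" where
  "xcoord lam i = beta lam i - alpha lam (i + 1)"

definition ycoord :: "nat list \<Rightarrow> nat \<Rightarrow> int" where
  "ycoord lam j = beta lam j - alpha lam j"

definition q :: "nat \<Rightarrow> nat list \<Rightarrow> rat" where
  "q k lam = (\<Sum>i = 0..n_corners lam. ((of_int (xcoord lam i) :: rat) gchoose 2) ^ k)
           - (\<Sum>i = 1..n_corners lam. ((of_int (ycoord lam i) :: rat) gchoose 2) ^ k)"

definition q_part :: "nat list \<Rightarrow> nat list \<Rightarrow> rat" where
  "q_part nu lam = (\<Prod>j<length nu. q (nu ! j) lam)"

definition add_box :: "nat list \<Rightarrow> nat list set" where
  "add_box lam = {mu. strict_partition mu \<and> diagram lam \<subseteq> diagram mu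
                      \<and> card (diagram mu - diagram lam) = 1}"

definition Dop :: "(nat list \<Rightarrow> rat) \<Rightarrow> nat list \<Rightarrow> rat" where
  "Dop G lam = (\<Sum>mu\<in>{mu\<in>add_box lam. length mu > length lam}. G mu)
             + 2 * (\<Sum>mu\<in>{mu\<in>add_box lam. length mu = length lam}. G mu)
             - G lam"

end

theory Submission
  imports Defs "HOL-Computational_Algebra.Polynomial_FPS"
begin


lemma sp_step:
  assumes "strict_partition l" "Suc k < length l"
  shows "l ! Suc k < l ! k"
  using assms unfolding Defs.strict_partition_def sorted_wrt_iff_nth_less by auto

lemma sp_gap:
  assumes "strict_partition l" "i + d < length l"
  shows "l ! (i + d) + d \<le> l ! i"
  using assms(2)
proof (induction d)
  case 0 then show ?case by simp
next
  case (Suc d)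
  have "l ! Suc (i + d) < l ! (i + d)" using sp_step[OF assms(1)] Suc.prems by simp
  with Suc show ?case by simp
qed

lemma sp_pos:
  assumes "strict_partition l" "i < length l"
  shows "0 < l ! i"
  using assms unfolding Defs.strict_partition_def by auto

lemma part_gap:
  assumes "strict_partition l" "1 \<le> i" "i \<le> j" "j \<le> length l"
  shows "part l j + (j - i) \<le> part l i"
proof -
  have "l ! ((i - 1) + (j - i)) + (j - i) \<le> l ! (i - 1)"
    using sp_gap[OF assms(1), of "i - 1" "j - i"] assms by simp
  moreover have "(i - 1) + (j - i) = j - 1" using assms by simp
  ultimately show ?thesis using assms unfolding Defs.part_def by auto
qed

lemma part_pos:
  assumes "strict_partition l" "1 \<le> i" "i \<le> length l"
  shows "0 < part l i"
  using sp_pos[OF assms(1), of "i - 1"] assms unfolding Defs.part_def by auto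

lemma part_zero: "length l < i \<Longrightarrow> part l i = 0"
  unfolding Defs.part_def by auto

lemma mem_diagram: "(i, j) \<in> diagram l \<longleftrightarrow> 1 \<le> i \<and> i \<le> length l \<and> i + 1 \<le> j \<and> j \<le> i + part l i"
  unfolding Defs.diagram_def by auto


definition legset :: "nat list \<Rightarrow> nat \<Rightarrow> nat \<Rightarrow> nat set" where
  "legset l i j = {i'. i < i' \<and> i' \<le> length l \<and> j \<le> i' + part l i'}"

context fixes l :: "nat list" assumes sp: "strict_partition l"
begin

lemma arm_card:
  assumes "(i, j) \<in> diagram l"
  shows "card {j'. (i, j') \<in> diagram l \<and> j' > j} = i + part l i - j"
proof -
  have "{j'. (i, j') \<in> diagram l \<and> j' > j} = {j<..i + part l i}"
    using assms by (auto simp: mem_diagram)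
  then show ?thesis by simp
qed

lemma end_mono:
  assumes "1 \<le> i" "i \<le> j" "j \<le> length l"
  shows "j + part l j \<le> i + part l i"
  using part_gap[OF sp assms] assms by simp

lemma leg_small:
  assumes "(i, j) \<in> diagram l" "j \<le> length l"
  shows "card {i'. (i', j) \<in> diagram l \<and> i' > i} = j - 1 - i"
proof -
  have "{i'. (i', j) \<in> diagram l \<and> i' > i} = {i<..<j}"
  proof (intro set_eqI iffI)
    fix x assume "x \<in> {i'. (i', j) \<in> diagram l \<and> i' > i}"
    then show "x \<in> {i<..<j}" by (auto simp: mem_diagram)
  next
    fix x assume x: "x \<in> {i<..<j}"
    have "j + part l j \<le> x + part l x" using end_mono[of x j] x assms by (auto simp: mem_diagram)
    then show "x \<in> {i'. (i', j) \<in> diagram l \<and> i' > i}"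
      using x assms by (auto simp: mem_diagram)
  qed
  then show ?thesis by simp
qed

lemma hook_small:
  assumes "(i, j) \<in> diagram l" "j \<le> length l"
  shows "hook l (i, j) = part l i + part l j"
  using arm_card[OF assms(1)] leg_small[OF assms] assms(1)
  unfolding Defs.hook_def by (auto simp: mem_diagram)


lemma legset_finite: "finite (legset l i j)"
  unfolding legset_def by (rule finite_subset[of _ "{..length l}"]) auto

lemma hook_big:
  assumes "(i, j) \<in> diagram l" "length l < j"
  shows "hook l (i, j) = i + part l i - j + card (legset l i j) + 1"
proof -
  have "{i'. (i', j) \<in> diagram l \<and> i' > i} = legset l i j"
    using assms unfolding legset_def by (auto simp: mem_diagram)
  then show ?thesis using arm_card[OF assms(1)] assms part_zero[of l j]
    unfolding Defs.hook_def by simp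
qed

lemma legset_down:
  assumes "x \<in> legset l i j" "i < y" "y \<le> x"
  shows "y \<in> legset l i j"
  using assms end_mono[of y x] unfolding legset_def by auto

lemma legset_le:
  assumes "x \<in> legset l i j"
  shows "x \<le> i + card (legset l i j)"
proof -
  have "{i<..x} \<subseteq> legset l i j" using legset_down[OF assms] by auto
  then have "card {i<..x} \<le> card (legset l i j)" by (intro card_mono legset_finite)
  then show ?thesis using assms unfolding legset_def by auto
qed

lemma legset_gt:
  assumes "x \<notin> legset l i j" "i < x" "x \<le> length l"
  shows "i + card (legset l i j) < x"
proof -
  have "legset l i j \<subseteq> {i<..<x}"
  proof
    fix y assume y: "y \<in> legset l i j"
    have "y < x"
    proof (rule ccontr)
      assume "\<not> y < x"
      then have "x \<in> legset l i j" using legset_down[OF y, of x] assms by auto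
      with assms show False by simp
    qed
    then show "y \<in> {i<..<x}" using y unfolding legset_def by auto
  qed
  then have "card (legset l i j) \<le> card {i<..<x}" by (intro card_mono) auto
  then show ?thesis using assms by auto
qed

lemma legset_anti: "j \<le> j' \<Longrightarrow> legset l i j' \<subseteq> legset l i j"
  unfolding legset_def by auto

end


context fixes l :: "nat list" assumes sp: "strict_partition l"
begin

lemma row_big:
  assumes i: "1 \<le> i" "i \<le> length l"
  shows "(\<Prod>j\<in>{length l<..i + part l i}. (of_nat (hook l (i, j)) :: rat))
       = fact (part l i) / (\<Prod>x\<in>{i<..length l}. of_nat (part l i - part l x))"
proof -
  define a where "a = part l i"
  define n where "n = length l"
  define J where "J = {n<..i + a}"
  define h where "h j = i + a - j + card (legset l i j) + 1" for j
  define D where "D = (\<lambda>x. a - part l x) ` {i<..n}"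
  have lastpos: "0 < part l n" using part_pos[OF sp, of n] i unfolding n_def by auto
  have "part l n + (n - i) \<le> a" using part_gap[OF sp, of i n] i unfolding a_def n_def by auto
  then have nle: "n < i + a" using lastpos i unfolding n_def by auto
  have indiag: "(i, j) \<in> diagram l" if "j \<in> J" for j
    using that i unfolding J_def n_def a_def by (auto simp: mem_diagram)
  have hook_eq: "hook l (i, j) = h j" if "j \<in> J" for j
    using hook_big[OF sp indiag[OF that]] that unfolding h_def J_def n_def a_def by auto
  have Lsub: "legset l i j \<subseteq> {i<..n}" for j unfolding legset_def n_def by auto
  have Lcard: "card (legset l i j) \<le> n - i" for j
    using card_mono[OF _ Lsub[of j]] by auto
  have dec: "h j' < h j" if "j \<in> J" "j' \<in> J" "j < j'" for j j'
  proof -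
    have "card (legset l i j') \<le> card (legset l i j)"
      using card_mono[OF legset_finite[OF sp] legset_anti[OF sp, of j j']] that by simp
    then show ?thesis using that unfolding h_def J_def by auto
  qed
  have inj: "inj_on h J"
  proof (rule inj_onI)
    fix x y assume "x \<in> J" "y \<in> J" "h x = h y"
    then show "x = y" using dec[of x y] dec[of y x] by (cases x y rule: linorder_cases) auto
  qed
  have partx: "part l x + (x - i) \<le> a" "0 < part l x" if "x \<in> {i<..n}" for x
    using part_gap[OF sp, of i x] part_pos[OF sp, of x] that i unfolding a_def n_def by auto
  have injD: "inj_on (\<lambda>x. a - part l x) {i<..n}"
  proof (rule inj_onI)
    fix x y assume xy: "x \<in> {i<..n}" "y \<in> {i<..n}" "a - part l x = a - part l y"
    show "x = y"
    proof (rule ccontr)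
      assume "x \<noteq> y"
      then consider "x < y" | "y < x" by linarith
      then show False
      proof cases
        case 1
        then have "part l y + (y - x) \<le> part l x" using part_gap[OF sp, of x y] xy unfolding n_def by auto
        then show False using xy partx[of x] partx[of y] 1 by auto
      next
        case 2
        then have "part l x + (x - y) \<le> part l y" using part_gap[OF sp, of y x] xy unfolding n_def by auto
        then show False using xy partx[of x] partx[of y] 2 by auto
      qed
    qed
  qed
  have Dsub: "D \<subseteq> {1..a}" unfolding D_def using partx by fastforce
  have cardD: "card D = n - i" unfolding D_def using card_image[OF injD] by simp
  have himg: "h ` J \<subseteq> {1..a} - D"
  proof
    fix v assume "v \<in> h ` J"
    then obtain j where j: "j \<in> J" "v = h j" by auto
    let ?L = "legset l i j"
    have jr: "n < j" "j \<le> i + a" using j unfolding J_def by auto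
    have "v \<le> a" using Lcard[of j] jr i unfolding j(2) h_def n_def by auto
    moreover have "v \<ge> 1" unfolding j(2) h_def by simp
    moreover have "v \<notin> D"
    proof
      assume "v \<in> D"
      then obtain x where x: "x \<in> {i<..n}" "v = a - part l x" unfolding D_def by auto
      show False
      proof (cases "x \<in> ?L")
        case True
        have "x \<le> i + card ?L" using legset_le[OF sp True] .
        moreover have "j \<le> x + part l x" using True unfolding legset_def by auto
        ultimately show False using x partx[OF x(1)] jr unfolding j(2) h_def by auto
      next
        case False
        have "i + card ?L < x" using legset_gt[OF sp False] x unfolding n_def by auto
        moreover have "x + part l x < j" using False x jr unfolding legset_def n_def by auto
        ultimately show False using x partx[OF x(1)] jr unfolding j(2) h_def by auto
      qed
    qed
    ultimately show "v \<in> {1..a} - D" by auto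
  qed
  have "card (h ` J) = i + a - n" using card_image[OF inj] unfolding J_def by simp
  moreover have "card ({1..a} - D) = i + a - n"
    using card_Diff_subset[OF finite_subset[OF Dsub] Dsub] cardD nle i unfolding n_def by simp
  ultimately have himg_eq: "h ` J = {1..a} - D"
    using card_subset_eq[OF _ himg] by auto
  have "(\<Prod>j\<in>J. (of_nat (hook l (i, j)) :: rat)) = (\<Prod>j\<in>J. of_nat (h j))"
    using hook_eq by (intro prod.cong) auto
  also have "\<dots> = (\<Prod>v\<in>h ` J. of_nat v)" using prod.reindex[OF inj, of "of_nat :: nat \<Rightarrow> rat"] by simp
  also have "\<dots> = (\<Prod>v\<in>{1..a} - D. of_nat v)" using himg_eq by simp
  also have "\<dots> = (\<Prod>v\<in>{1..a}. (of_nat v :: rat)) / (\<Prod>v\<in>D. of_nat v)"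
  proof -
    have "(\<Prod>v\<in>{1..a}. (of_nat v :: rat)) = (\<Prod>v\<in>{1..a} - D. of_nat v) * (\<Prod>v\<in>D. of_nat v)"
      using prod.subset_diff[OF Dsub] by simp
    moreover have "(\<Prod>v\<in>D. (of_nat v :: rat)) \<noteq> 0" using Dsub by (auto simp: prod_zero_iff finite_subset)
    ultimately show ?thesis by simp
  qed
  also have "(\<Prod>v\<in>D. (of_nat v :: rat)) = (\<Prod>x\<in>{i<..n}. of_nat (a - part l x))"
    unfolding D_def using prod.reindex[OF injD, of "of_nat :: nat \<Rightarrow> rat"] by simp
  also have "(\<Prod>v\<in>{1..a}. (of_nat v :: rat)) = fact a"
    by (simp add: fact_prod)
  finally show ?thesis unfolding J_def a_def n_def .
qed

lemma row_prod:
  assumes i: "1 \<le> i" "i \<le> length l"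
  shows "(\<Prod>j\<in>{i<..i + part l i}. (of_nat (hook l (i, j)) :: rat))
       = fact (part l i) * (\<Prod>x\<in>{i<..length l}. (of_nat (part l i) + of_nat (part l x)) / (of_nat (part l i) - of_nat (part l x)))"
proof -
  define a where "a = part l i"
  define n where "n = length l"
  have lastpos: "0 < part l n" using part_pos[OF sp, of n] i unfolding n_def by auto
  have "part l n + (n - i) \<le> a" using part_gap[OF sp, of i n] i unfolding a_def n_def by auto
  then have nle: "n < i + a" using lastpos i unfolding n_def by auto
  have partx: "part l x + (x - i) \<le> a" if "x \<in> {i<..n}" for x
    using part_gap[OF sp, of i x] that i unfolding a_def n_def by auto
  have split: "{i<..i + a} = {i<..n} \<union> {n<..i + a}" using nle i unfolding n_def by auto
  have "(\<Prod>j\<in>{i<..i + a}. (of_nat (hook l (i, j)) :: rat))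
      = (\<Prod>j\<in>{i<..n}. of_nat (hook l (i, j))) * (\<Prod>j\<in>{n<..i + a}. of_nat (hook l (i, j)))"
    unfolding split by (rule prod.union_disjoint) auto
  also have "(\<Prod>j\<in>{i<..n}. (of_nat (hook l (i, j)) :: rat)) = (\<Prod>j\<in>{i<..n}. of_nat a + of_nat (part l j))"
  proof (rule prod.cong)
    fix j assume j: "j \<in> {i<..n}"
    then have "(i, j) \<in> diagram l" using partx[OF j] i unfolding n_def a_def by (auto simp: mem_diagram)
    then show "(of_nat (hook l (i, j)) :: rat) = of_nat a + of_nat (part l j)"
      using hook_small[OF sp] j unfolding a_def n_def by auto
  qed simp
  also have "(\<Prod>j\<in>{n<..i + a}. (of_nat (hook l (i, j)) :: rat)) = fact a / (\<Prod>x\<in>{i<..n}. of_nat (a - part l x))"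
    using row_big[OF i] unfolding a_def n_def .
  also have "(\<Prod>x\<in>{i<..n}. (of_nat (a - part l x) :: rat)) = (\<Prod>x\<in>{i<..n}. of_nat a - of_nat (part l x))"
  proof (rule prod.cong)
    fix x assume "x \<in> {i<..n}"
    then have "part l x \<le> a" using partx by fastforce
    then show "(of_nat (a - part l x) :: rat) = of_nat a - of_nat (part l x)" by (simp add: of_nat_diff)
  qed simp
  finally show ?thesis unfolding a_def[symmetric] n_def[symmetric]
    by (simp add: prod_dividef)
qed

end


definition Hs :: "nat set \<Rightarrow> rat" where
  "Hs S = (\<Prod>a\<in>S. fact a * (\<Prod>b\<in>{b\<in>S. b < a}. (of_nat a + of_nat b) / (of_nat a - of_nat b)))"

context fixes l :: "nat list" assumes sp: "strict_partition l"
begin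

lemma part_less:
  assumes "1 \<le> x" "x < y" "y \<le> length l"
  shows "part l y < part l x"
  using part_gap[OF sp, of x y] assms by auto

lemma part_inj: "inj_on (part l) {1..length l}"
proof (rule inj_onI)
  fix x y assume "x \<in> {1..length l}" "y \<in> {1..length l}" "part l x = part l y"
  then show "x = y" using part_less[of x y] part_less[of y x] by (cases x y rule: linorder_cases) auto
qed

lemma set_part: "set l = part l ` {1..length l}"
proof (intro set_eqI iffI)
  fix b assume "b \<in> set l"
  then obtain k where "k < length l" "l ! k = b" by (auto simp: in_set_conv_nth)
  then show "b \<in> part l ` {1..length l}" unfolding Defs.part_def
    by (intro image_eqI[of _ _ "Suc k"]) auto
next
  fix b assume "b \<in> part l ` {1..length l}"
  then show "b \<in> set l" unfolding Defs.part_def by auto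
qed

lemma part_img_below:
  assumes "1 \<le> i" "i \<le> length l"
  shows "part l ` {i<..length l} = {b \<in> set l. b < part l i}"
proof (intro set_eqI iffI)
  fix b assume "b \<in> part l ` {i<..length l}"
  then obtain x where "x \<in> {i<..length l}" "b = part l x" by auto
  then show "b \<in> {b \<in> set l. b < part l i}" using part_less[of i x] assms set_part by auto
next
  fix b assume b: "b \<in> {b \<in> set l. b < part l i}"
  then obtain x where x: "x \<in> {1..length l}" "b = part l x" using set_part by auto
  have "i < x"
  proof (rule ccontr)
    assume "\<not> i < x"
    then have "x \<le> i" by simp
    then have "part l i \<le> part l x" using part_less[of x i] x assms by (cases "x = i") auto
    then show False using b x by auto
  qed
  then show "b \<in> part l ` {i<..length l}" using x by auto
qed

lemma diagram_Sigma: "diagram l = Sigma {1..length l} (\<lambda>i. {i<..i + part l i})"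
  by (auto simp: mem_diagram)

lemma H_Hs: "H l = Hs (set l)"
proof -
  have "H l = (\<Prod>i\<in>{1..length l}. \<Prod>j\<in>{i<..i + part l i}. (of_nat (hook l (i, j)) :: rat))"
    unfolding Defs.H_def diagram_Sigma by (subst prod.Sigma) auto
  also have "\<dots> = (\<Prod>i\<in>{1..length l}. fact (part l i) * (\<Prod>x\<in>{i<..length l}. (of_nat (part l i) + of_nat (part l x)) / (of_nat (part l i) - of_nat (part l x))))"
    using row_prod[OF sp] by (intro prod.cong) auto
  also have "\<dots> = (\<Prod>i\<in>{1..length l}. fact (part l i) * (\<Prod>b\<in>{b \<in> set l. b < part l i}. (of_nat (part l i) + of_nat b) / (of_nat (part l i) - of_nat b)))"
  proof (rule prod.cong)
    fix i assume i: "i \<in> {1..length l}"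
    have inj2: "inj_on (part l) {i<..length l}" by (rule inj_on_subset[OF part_inj]) (use i in auto)
    show "fact (part l i) * (\<Prod>x\<in>{i<..length l}. (of_nat (part l i) + of_nat (part l x)) / (of_nat (part l i) - of_nat (part l x)))
      = (fact (part l i) :: rat) * (\<Prod>b\<in>{b \<in> set l. b < part l i}. (of_nat (part l i) + of_nat b) / (of_nat (part l i) - of_nat b))"
      using prod.reindex[OF inj2, of "\<lambda>b. (of_nat (part l i) + of_nat b) / (of_nat (part l i) - of_nat b) :: rat"]
        part_img_below[of i] i by simp
  qed simp
  also have "\<dots> = Hs (set l)"
    unfolding Hs_def set_part using prod.reindex[OF part_inj, of "\<lambda>a. fact a * (\<Prod>b\<in>{b \<in> part l ` {1..length l}. b < a}. (of_nat a + of_nat b) / (of_nat a - of_nat b)) :: rat"]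
    by (simp add: set_part)
  finally show ?thesis .
qed

end


lemma mem_diagram': "(i, j) \<in> diagram l \<longleftrightarrow> 1 \<le> i \<and> i + 1 \<le> j \<and> j \<le> i + part l i"
  unfolding mem_diagram using part_zero[of l i] by (cases "i \<le> length l") auto

lemma diagram_eq_part: "(\<And>i. 1 \<le> i \<Longrightarrow> part l i = part mu i) \<Longrightarrow> diagram l = diagram mu"
  by (auto simp: mem_diagram')

lemma part_Suc_le:
  assumes "strict_partition l" "1 \<le> i"
  shows "part l (Suc i) \<le> part l i \<and> (0 < part l i \<longrightarrow> part l (Suc i) < part l i)"
proof (cases "Suc i \<le> length l")
  case True
  then show ?thesis using part_gap[OF assms(1), of i "Suc i"] assms by auto
next
  case False
  then show ?thesis using part_zero[of l "Suc i"] by auto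
qed

definition Cor :: "nat list \<Rightarrow> nat set" where
  "Cor l = {i. 1 \<le> i \<and> i \<le> length l \<and> (i = length l \<or> part l (Suc i) + 1 < part l i)}"

lemma Cor_finite: "finite (Cor l)"
  unfolding Cor_def by (rule finite_subset[of _ "{..length l}"]) auto

lemma part_update:
  assumes "1 \<le> i" "i \<le> length l"
  shows "part (l[i - 1 := v]) r = (if r = i then v else part l r)"
  using assms unfolding Defs.part_def by (auto simp: nth_list_update)

context fixes l :: "nat list" assumes sp: "strict_partition l"
begin

lemma corner_imp:
  assumes "(i, j) \<in> outer_corners l"
  shows "i \<in> Cor l \<and> j = i + part l i"
proof -
  from assms obtain mu where b: "(i, j) \<in> diagram l" and mu: "strict_partition mu" "diagram mu = diagram l - {(i, j)}"
    unfolding Defs.outer_corners_def by auto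
  have i: "1 \<le> i" "i \<le> length l" using b by (auto simp: mem_diagram)
  have rowcard: "card {c. (r, c) \<in> diagram L} = part L r" if "1 \<le> r" for r L
  proof -
    have "{c. (r, c) \<in> diagram L} = {r<..r + part L r}" using that by (auto simp: mem_diagram')
    then show ?thesis by simp
  qed
  have eqrow: "{c. (r, c) \<in> diagram mu} = {c. (r, c) \<in> diagram l} - (if r = i then {j} else {})" for r
    using mu(2) by auto
  have pmu: "part mu r = (if r = i then part l i - 1 else part l r)" if "1 \<le> r" for r
  proof -
    show ?thesis
    proof (cases "r = i")
      case True
      have "j \<in> {c. (r, c) \<in> diagram l}" using b True by simp
      then show ?thesis using eqrow[of r] rowcard[OF that, of mu] rowcard[OF that, of l] True
        by (simp add: card_Diff_singleton_if)
    next
      case False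
      then show ?thesis using eqrow[of r] rowcard[OF that, of mu] rowcard[OF that, of l] by simp
    qed
  qed
  have jeq: "j = i + part l i"
  proof (rule ccontr)
    assume ne: "j \<noteq> i + part l i"
    have "(i, i + part l i) \<in> diagram l" using part_pos[OF sp i] i by (auto simp: mem_diagram')
    then have "(i, i + part l i) \<in> diagram mu" using mu(2) ne by auto
    then show False using pmu[OF i(1)] part_pos[OF sp i] by (auto simp: mem_diagram')
  qed
  have "i = length l \<or> part l (Suc i) + 1 < part l i"
  proof (cases "i = length l")
    case False
    then have "0 < part l (Suc i)" using part_pos[OF sp, of "Suc i"] i by auto
    moreover have "part mu (Suc i) = part l (Suc i)" using pmu[of "Suc i"] by auto
    moreover note part_Suc_le[OF mu(1) i(1)]
    moreover have "part mu i = part l i - 1" using pmu[OF i(1)] by simp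
    ultimately show ?thesis by auto
  qed simp
  then show ?thesis using i jeq unfolding Cor_def by auto
qed

end


definition T :: "nat \<Rightarrow> rat" where "T a = of_nat a * (of_nat a + 1) / 2"

lemma gchoose2: "(x::rat) gchoose 2 = x*(x-1)/2" by (simp add: gbinomial_prod_rev numeral_2_eq_2)

lemma strict_adj:
  assumes "\<And>k. Suc k < length L \<Longrightarrow> L ! Suc k < L ! k" "\<And>x. x \<in> set L \<Longrightarrow> 0 < x"
  shows "strict_partition L"
  unfolding Defs.strict_partition_def using assms
  by (subst sorted_wrt_iff_nth_Suc_transp) (auto simp: transp_def)

context fixes l :: "nat list" assumes sp: "strict_partition l"
begin

lemma corner_intro:
  assumes i: "i \<in> Cor l"
  shows "(i, i + part l i) \<in> outer_corners l"
proof -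
  have i1: "1 \<le> i" "i \<le> length l" and ic: "i = length l \<or> part l (Suc i) + 1 < part l i"
    using i unfolding Cor_def by auto
  have ppos: "0 < part l i" using part_pos[OF sp i1] .
  obtain mu where mu: "strict_partition mu" and pm: "\<And>r. 1 \<le> r \<Longrightarrow> part mu r = (if r = i then part l i - 1 else part l r)"
  proof (cases "i = length l \<and> part l i = 1")
    case True
    define mu where "mu = take (length l - 1) l"
    have "strict_partition mu" using sp unfolding mu_def Defs.strict_partition_def
      by (auto dest: in_set_takeD)
    moreover have "part mu r = (if r = i then part l i - 1 else part l r)" if "1 \<le> r" for r
      using True that unfolding mu_def Defs.part_def by auto
    ultimately show ?thesis using that by blast
  next
    case False
    define mu where "mu = l[i - 1 := part l i - 1]"
    have pmu: "part mu r = (if r = i then part l i - 1 else part l r)" for r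
      unfolding mu_def using part_update[OF i1] by simp
    have len: "length mu = length l" unfolding mu_def by simp
    have nth: "mu ! k = part mu (Suc k)" if "k < length mu" for k
      using that unfolding Defs.part_def by simp
    have "strict_partition mu"
    proof (rule strict_adj)
      fix k assume k: "Suc k < length mu"
      have a: "part l (Suc (Suc k)) < part l (Suc k)"
        using part_less[OF sp, of "Suc k" "Suc (Suc k)"] k len by auto
      have b: "part l (Suc (Suc k)) + 1 < part l (Suc k)" if "Suc k = i"
        using ic that k len by auto
      show "mu ! Suc k < mu ! k"
        unfolding nth[OF k] nth[of k] using k pmu a b len part_gap[OF sp, of "Suc k" "Suc (Suc k)"]
          part_gap[OF sp, of "Suc k" i] i1
        by (auto simp: nth)
    next
      fix x assume "x \<in> set mu"
      then obtain k where k: "k < length mu" "x = mu ! k" by (auto simp: in_set_conv_nth)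
      show "0 < x" using k nth[OF k(1)] pmu part_pos[OF sp, of "Suc k"] len False ic i1
        by (cases "Suc k = i") auto
    qed
    then show ?thesis using that pmu by blast
  qed
  have "diagram mu = diagram l - {(i, i + part l i)}"
    using pm ppos by (auto simp: mem_diagram' split: if_splits)
  moreover have "(i, i + part l i) \<in> diagram l" using ppos i1 by (auto simp: mem_diagram')
  ultimately show ?thesis unfolding Defs.outer_corners_def using mu by blast
qed

lemma oc_eq: "outer_corners l = (\<lambda>i. (i, i + part l i)) ` Cor l"
  using corner_imp[OF sp] corner_intro by fastforce

end


definition ecol :: "nat list \<Rightarrow> nat \<Rightarrow> int" where "ecol l r = int r + int (part l r)"

lemma sum_shift1: "(\<Sum>s\<in>{1..m::nat}. h (s - 1)) = (\<Sum>p<m. (h p :: 'a::comm_monoid_add))"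
  by (induction m) (auto simp: atLeastAtMostSuc_conv add.commute)

lemma sum_nth_distinct:
  assumes "distinct xs"
  shows "(\<Sum>p<length xs. g (xs ! p)) = (\<Sum>c\<in>set xs. (g c :: 'a::comm_monoid_add))"
proof -
  have inj: "inj_on (nth xs) {..<length xs}" using assms by (auto simp: inj_on_def distinct_conv_nth)
  have "set xs = nth xs ` {..<length xs}" by (auto simp: set_conv_nth)
  then show ?thesis using sum.reindex[OF inj, of g] by simp
qed

lemma telesc: "(\<Sum>r\<in>{1..n::nat}. u r) + u 0 = (\<Sum>r\<in>{1..n}. u (r - 1)) + (u n :: 'a::comm_monoid_add)"
proof (induction n)
  case (Suc n)
  have "(\<Sum>r\<in>{1..Suc n}. u r) + u 0 = u (Suc n) + ((\<Sum>r\<in>{1..n}. u r) + u 0)"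
    by (simp add: atLeastAtMostSuc_conv add_ac)
  also have "\<dots> = u (Suc n) + ((\<Sum>r\<in>{1..n}. u (r - 1)) + u n)" using Suc.IH by simp
  also have "\<dots> = (\<Sum>r\<in>{1..Suc n}. u (r - 1)) + u (Suc n)"
    by (simp add: atLeastAtMostSuc_conv add_ac)
  finally show ?case .
qed simp

context fixes l :: "nat list" assumes sp: "strict_partition l"
begin

lemma fst_oc: "fst ` outer_corners l = Cor l"
  unfolding oc_eq[OF sp] by force

lemma R_eq: "corner_rows l = rev (sorted_list_of_set (Cor l))"
  unfolding Defs.corner_rows_def fst_oc ..

lemma m_eq: "n_corners l = card (Cor l)"
  unfolding Defs.n_corners_def oc_eq[OF sp] by (rule card_image) (auto simp: inj_on_def)

lemma lenR: "length (corner_rows l) = n_corners l"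
  unfolding R_eq m_eq by (simp add: Cor_finite)

lemma setR: "set (corner_rows l) = Cor l"
  unfolding R_eq by (simp add: Cor_finite)

lemma distR: "distinct (corner_rows l)"
  unfolding R_eq by (simp add: Cor_finite)

lemma R_dec:
  assumes "p < p2" "p2 < length (corner_rows l)"
  shows "corner_rows l ! p2 < corner_rows l ! p"
proof -
  have "sorted_wrt (<) (sorted_list_of_set (Cor l))" by (simp add: Cor_finite strict_sorted_list_of_set)
  then have "sorted_wrt (>) (corner_rows l)" unfolding R_eq by (simp add: sorted_wrt_rev)
  then show ?thesis using sorted_wrt_nth_less assms by fastforce
qed

lemma R_Cor: "p < length (corner_rows l) \<Longrightarrow> corner_rows l ! p \<in> Cor l"
  using setR nth_mem by blast

lemma Cor_R: "c \<in> Cor l \<Longrightarrow> \<exists>p < length (corner_rows l). corner_rows l ! p = c"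
  using setR by (auto simp: in_set_conv_nth)

lemma R_le_pos: "p \<le> p' \<Longrightarrow> p' < length (corner_rows l) \<Longrightarrow> corner_rows l ! p' \<le> corner_rows l ! p"
  using R_dec[of p p'] by (cases "p = p'") auto

lemma beta_val:
  assumes "1 \<le> s" "s \<le> n_corners l"
  shows "beta l s = int (corner_rows l ! (s - 1)) + int (part l (corner_rows l ! (s - 1)))"
proof -
  define c where "c = corner_rows l ! (s - 1)"
  have c: "c \<in> Cor l" unfolding c_def using R_Cor assms lenR by auto
  have "(THE j. (c, j) \<in> outer_corners l) = c + part l c"
    by (rule the_equality) (use c in \<open>auto simp: oc_eq[OF sp]\<close>)
  then show ?thesis unfolding Defs.beta_def c_def using assms by simp
qed

lemma alpha_val: "1 \<le> s \<Longrightarrow> s \<le> n_corners l \<Longrightarrow> alpha l s = int (corner_rows l ! (s - 1))"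
  unfolding Defs.alpha_def by simp

lemma Cor_range: "c \<in> Cor l \<Longrightarrow> 1 \<le> c \<and> c \<le> length l"
  unfolding Cor_def by auto

lemma noncorner_step:
  assumes "1 \<le> r" "r < length l" "r \<notin> Cor l"
  shows "ecol l (Suc r) = ecol l r"
proof -
  have "part l (Suc r) + 1 \<le> part l r" using part_gap[OF sp, of r "Suc r"] assms by auto
  moreover have "\<not> part l (Suc r) + 1 < part l r" using assms unfolding Cor_def by auto
  ultimately show ?thesis unfolding ecol_def by simp
qed

lemma ecol_const:
  assumes "1 \<le> a" "b \<le> length l" "\<And>r. a \<le> r \<Longrightarrow> r < a + d \<Longrightarrow> r \<notin> Cor l" "a + d \<le> b"
  shows "ecol l a = ecol l (a + d)"
  using assms(3,4)
proof (induction d)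
  case (Suc d)
  then have "ecol l a = ecol l (a + d)" by auto
  also have "\<dots> = ecol l (Suc (a + d))"
    using noncorner_step[of "a + d"] Suc.prems assms by auto
  finally show ?case by simp
qed simp

lemma len_Cor: "1 \<le> length l \<Longrightarrow> length l \<in> Cor l"
  unfolding Cor_def by auto

lemma R0: "1 \<le> length l \<Longrightarrow> corner_rows l ! 0 = length l \<and> 1 \<le> n_corners l"
proof -
  assume a: "1 \<le> length l"
  obtain p where p: "p < length (corner_rows l)" "corner_rows l ! p = length l"
    using Cor_R[OF len_Cor[OF a]] by auto
  have "0 < length (corner_rows l)" using p by auto
  then have "corner_rows l ! 0 \<le> length l" using Cor_range[OF R_Cor, of 0] by auto
  moreover have "corner_rows l ! p \<le> corner_rows l ! 0" using R_le_pos[of 0 p] p by auto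
  ultimately show ?thesis using p lenR by auto
qed

lemma Rmin: "c \<in> Cor l \<Longrightarrow> corner_rows l ! (n_corners l - 1) \<le> c"
proof -
  assume c: "c \<in> Cor l"
  obtain p where p: "p < length (corner_rows l)" "corner_rows l ! p = c" using Cor_R[OF c] by auto
  show ?thesis using R_le_pos[of p "n_corners l - 1"] p lenR by auto
qed

end


definition Qs :: "nat \<Rightarrow> nat set \<Rightarrow> rat" where
  "Qs k S = (\<Sum>a\<in>S. T a ^ k - T (a - 1) ^ k)"

lemma q_Qs:
  assumes sp: "strict_partition l" and k: "1 \<le> k"
  shows "q k l = Qs k (set l)"
proof -
  define f :: "int \<Rightarrow> rat" where "f t = (of_int t gchoose 2) ^ k" for t
  define m where "m = n_corners l"
  define R where "R = corner_rows l"
  have q_unf: "q k l = (\<Sum>s\<in>{0..m}. f (xcoord l s)) - (\<Sum>s\<in>{1..m}. f (ycoord l s))"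
    unfolding Defs.q_def f_def m_def ..
  have f1: "f 1 = 0" unfolding f_def using k by (simp add: gchoose2)
  have fpart: "f (int a + 1) - f (int a) = T a ^ k - T (a - 1) ^ k" if "1 \<le> a" for a
  proof -
    have "(of_int (int a + 1) gchoose 2 :: rat) = T a" unfolding T_def gchoose2 by (simp add: algebra_simps)
    moreover have "(of_int (int a) gchoose 2 :: rat) = T (a - 1)" unfolding T_def gchoose2 using that
      by (simp add: of_nat_diff algebra_simps)
    ultimately show ?thesis unfolding f_def by simp
  qed
  have target: "Qs k (set l) = (\<Sum>r\<in>{1..length l}. f (int (part l r) + 1) - f (int (part l r)))"
  proof -
    have "Qs k (set l) = (\<Sum>r\<in>{1..length l}. T (part l r) ^ k - T (part l r - 1) ^ k)"
      unfolding Qs_def set_part[OF sp] by (rule sum.reindex[OF part_inj[OF sp], unfolded comp_def])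
    also have "\<dots> = (\<Sum>r\<in>{1..length l}. f (int (part l r) + 1) - f (int (part l r)))"
      using fpart part_pos[OF sp] by (intro sum.cong) (auto simp: Suc_le_eq)
    finally show ?thesis .
  qed
  show ?thesis
  proof (cases "l = []")
    case True
    then have "Cor l = {}" unfolding Cor_def by auto
    then have m0: "m = 0" unfolding m_def m_eq[OF sp] by simp
    have "xcoord l 0 = 1" unfolding Defs.xcoord_def Defs.beta_def Defs.alpha_def using m0 True m_def by simp
    then show ?thesis unfolding q_unf target using m0 f1 True by simp
  next
    case False
    then have l1: "1 \<le> length l" by (cases l) auto
    have lenR: "length R = m" unfolding R_def m_def using lenR[OF sp] .
    have m1: "1 \<le> m" and R0: "R ! 0 = length l" using R0[OF sp l1] unfolding R_def m_def by auto
    have ysum: "(\<Sum>s\<in>{1..m}. f (ycoord l s)) = (\<Sum>c\<in>Cor l. f (int (part l c)))"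
    proof -
      have "(\<Sum>s\<in>{1..m}. f (ycoord l s)) = (\<Sum>s\<in>{1..m}. (\<lambda>p. f (int (part l (R ! p)))) (s - 1))"
        by (rule sum.cong) (auto simp: Defs.ycoord_def beta_val[OF sp] alpha_val[OF sp] m_def R_def)
      also have "\<dots> = (\<Sum>p<length R. f (int (part l (R ! p))))" unfolding lenR by (rule sum_shift1)
      also have "\<dots> = (\<Sum>c\<in>Cor l. f (int (part l c)))"
        using sum_nth_distinct[OF distR[OF sp], of "\<lambda>c. f (int (part l c))"] setR[OF sp] unfolding R_def by simp
      finally show ?thesis .
    qed
    have xlow: "xcoord l p = ecol l (R ! p + 1) - int (R ! p)" if p: "p < m" for p
    proof (cases "p = 0")
      case True
      have "alpha l 1 = int (R ! 0)" using alpha_val[OF sp, of 1] m1 unfolding R_def m_def by simp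
      moreover have "ecol l (R ! 0 + 1) = int (length l) + 1" unfolding R0 ecol_def using part_zero[of l "Suc (length l)"] by simp
      ultimately show ?thesis unfolding Defs.xcoord_def Defs.beta_def True by simp
    next
      case False
      have b: "beta l p = ecol l (R ! (p - 1))" using beta_val[OF sp, of p] p False unfolding R_def m_def ecol_def by simp
      have a: "alpha l (p + 1) = int (R ! p)" using alpha_val[OF sp, of "p + 1"] p unfolding R_def m_def by simp
      have lt: "R ! p < R ! (p - 1)" using R_dec[OF sp, of "p - 1" p] p False lenR unfolding R_def by auto
      have c1: "1 \<le> R ! p" and c2: "R ! (p - 1) \<le> length l"
        using Cor_range[OF sp R_Cor[OF sp]] p lenR unfolding R_def by (auto simp del: One_nat_def)
      have "ecol l (R ! p + 1) = ecol l (R ! p + 1 + (R ! (p - 1) - (R ! p + 1)))"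
      proof (rule ecol_const[OF sp, of _ "R ! (p - 1)"])
        fix r assume r: "R ! p + 1 \<le> r" "r < R ! p + 1 + (R ! (p - 1) - (R ! p + 1))"
        show "r \<notin> Cor l"
        proof
          assume "r \<in> Cor l"
          then obtain t where t: "t < length R" "R ! t = r" using Cor_R[OF sp] unfolding R_def by blast
          show False
          proof (cases "t < p")
            case True
            then have "R ! (p - 1) \<le> R ! t" using R_le_pos[OF sp, of t "p - 1"] lenR p unfolding R_def by auto
            then show False using r t lt by auto
          next
            case False
            then have "R ! t \<le> R ! p" using R_le_pos[OF sp, of p t] t unfolding R_def by auto
            then show False using r t by auto
          qed
        qed
      qed (use c1 c2 lt in auto)
      also have "R ! p + 1 + (R ! (p - 1) - (R ! p + 1)) = R ! (p - 1)" using lt by auto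
      finally show ?thesis unfolding Defs.xcoord_def a b by simp
    qed
    have xtop: "xcoord l m = ecol l 1"
    proof -
      have a: "alpha l (m + 1) = 0" unfolding Defs.alpha_def m_def by simp
      have b: "beta l m = ecol l (R ! (m - 1))" using beta_val[OF sp, of m] m1 unfolding R_def m_def ecol_def by simp
      have c2: "1 \<le> R ! (m - 1) \<and> R ! (m - 1) \<le> length l" using Cor_range[OF sp R_Cor[OF sp, of "m - 1"]] m1 lenR unfolding R_def by auto
      have "ecol l 1 = ecol l (1 + (R ! (m - 1) - 1))"
      proof (rule ecol_const[OF sp, of _ "R ! (m - 1)"])
        fix r assume r: "1 \<le> r" "r < 1 + (R ! (m - 1) - 1)"
        show "r \<notin> Cor l" using Rmin[OF sp, of r] r unfolding R_def m_def by auto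
      qed (use c2 in auto)
      also have "1 + (R ! (m - 1) - 1) = R ! (m - 1)"
        using Cor_range[OF sp R_Cor[OF sp, of "m - 1"]] m1 lenR unfolding R_def by auto
      finally show ?thesis unfolding Defs.xcoord_def a b by simp
    qed
    have xsum: "(\<Sum>s\<in>{0..m}. f (xcoord l s)) = (\<Sum>c\<in>Cor l. f (ecol l (c + 1) - int c)) + f (ecol l 1)"
    proof -
      have "{0..m} = {..<Suc m}" by auto
      then have "(\<Sum>s\<in>{0..m}. f (xcoord l s)) = (\<Sum>p<m. f (xcoord l p)) + f (xcoord l m)" by simp
      also have "(\<Sum>p<m. f (xcoord l p)) = (\<Sum>p<length R. f (ecol l (R ! p + 1) - int (R ! p)))"
        using xlow lenR by (intro sum.cong) auto
      also have "\<dots> = (\<Sum>c\<in>Cor l. f (ecol l (c + 1) - int c))"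
        using sum_nth_distinct[OF distR[OF sp], of "\<lambda>c. f (ecol l (c + 1) - int c)"] setR[OF sp] unfolding R_def by simp
      finally show ?thesis using xtop by simp
    qed
    define u where "u r = f (ecol l (r + 1) - int r)" for r
    have ext: "(\<Sum>c\<in>Cor l. u c - f (int (part l c))) = (\<Sum>r\<in>{1..length l}. u r - f (int (part l r)))"
    proof (rule sum.mono_neutral_left)
      show "Cor l \<subseteq> {1..length l}" using Cor_range[OF sp] by auto
    next
      show "\<forall>r\<in>{1..length l} - Cor l. u r - f (int (part l r)) = 0"
      proof
        fix r assume r: "r \<in> {1..length l} - Cor l"
        have "r \<noteq> length l" using r len_Cor[OF sp] by auto
        then have "ecol l (Suc r) = ecol l r" using noncorner_step[OF sp, of r] r by auto
        then show "u r - f (int (part l r)) = 0" unfolding u_def ecol_def by simp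
      qed
    qed simp
    have tel: "(\<Sum>r\<in>{1..length l}. u r) + u 0 = (\<Sum>r\<in>{1..length l}. f (int (part l r) + 1)) + u (length l)"
    proof -
      have "(\<Sum>r\<in>{1..length l}. u (r - 1)) = (\<Sum>r\<in>{1..length l}. f (int (part l r) + 1))"
        unfolding u_def ecol_def by (intro sum.cong) (auto simp: of_nat_diff)
      then show ?thesis using telesc[of u "length l"] by simp
    qed
    have ul: "u (length l) = 0" unfolding u_def ecol_def using part_zero[of l "length l + 1"] f1 by simp
    have u0: "u 0 = f (ecol l 1)" unfolding u_def by simp
    have "q k l = (\<Sum>c\<in>Cor l. u c - f (int (part l c))) + u 0"
      unfolding q_unf xsum ysum u_def by (simp add: sum_subtractf)
    also have "\<dots> = (\<Sum>r\<in>{1..length l}. u r) + u 0 - (\<Sum>r\<in>{1..length l}. f (int (part l r)))"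
      unfolding ext by (simp add: sum_subtractf)
    also have "\<dots> = Qs k (set l)" unfolding tel ul target by (simp add: sum_subtractf)
    finally show ?thesis .
  qed
qed


definition inc :: "nat list \<Rightarrow> nat \<Rightarrow> nat list" where
  "inc l i = (if i \<le> length l then l[i - 1 := part l i + 1] else l @ [1])"

definition okpos :: "nat list \<Rightarrow> nat \<Rightarrow> bool" where
  "okpos l i \<longleftrightarrow> (i = 1 \<or> part l i + 1 < part l (i - 1))"

lemma part_inc:
  assumes "1 \<le> i" "i \<le> length l + 1"
  shows "part (inc l i) r = (if r = i then part l i + 1 else part l r)"
proof (cases "i \<le> length l")
  case True
  then show ?thesis unfolding inc_def using part_update[OF assms(1) True] by simp
next
  case False
  then have i: "i = length l + 1" using assms by simp
  show ?thesis unfolding inc_def using False i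
    by (auto simp: Defs.part_def nth_append)
qed

lemma len_inc: "length (inc l i) = (if i \<le> length l then length l else length l + 1)"
  unfolding inc_def by simp

lemma strict_by_part:
  assumes "\<And>r. 1 \<le> r \<Longrightarrow> r < length L \<Longrightarrow> part L (Suc r) < part L r"
    "\<And>r. 1 \<le> r \<Longrightarrow> r \<le> length L \<Longrightarrow> 0 < part L r"
  shows "strict_partition L"
proof (rule strict_adj)
  fix k assume "Suc k < length L"
  then show "L ! Suc k < L ! k" using assms(1)[of "Suc k"] unfolding Defs.part_def by auto
next
  fix x assume "x \<in> set L"
  then obtain k where "k < length L" "x = L ! k" by (auto simp: in_set_conv_nth)
  then show "0 < x" using assms(2)[of "Suc k"] unfolding Defs.part_def by auto
qed

lemma part_eq_list:
  assumes a: "strict_partition a" and b: "strict_partition b" and eq: "\<And>r. 1 \<le> r \<Longrightarrow> part a r = part b r"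
  shows "a = b"
proof -
  have "length a = length b"
  proof (rule ccontr)
    assume "length a \<noteq> length b"
    then consider "length a < length b" | "length b < length a" by linarith
    then show False
    proof cases
      case 1
      then show False using part_pos[OF b, of "length b"] part_zero[of a "length b"] eq[of "length b"] by auto
    next
      case 2
      then show False using part_pos[OF a, of "length a"] part_zero[of b "length a"] eq[of "length a"] by auto
    qed
  qed
  moreover have "a ! k = b ! k" if "k < length a" for k
    using eq[of "Suc k"] that \<open>length a = length b\<close> unfolding Defs.part_def by auto
  ultimately show ?thesis by (rule nth_equalityI)
qed

lemma sum_eq_1:
  assumes "finite A" "(\<Sum>x\<in>A. g x) = (1::nat)"
  shows "\<exists>r0\<in>A. g r0 = 1 \<and> (\<forall>r\<in>A - {r0}. g r = 0)"
proof -
  obtain r0 where r0: "r0 \<in> A" "g r0 \<noteq> 0" using assms sum.neutral by (metis one_neq_zero)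
  have "(\<Sum>x\<in>A. g x) = g r0 + (\<Sum>x\<in>A - {r0}. g x)" using sum.remove[OF assms(1) r0(1)] .
  then have "g r0 = 1" "(\<Sum>x\<in>A - {r0}. g x) = 0" using assms(2) r0(2) by auto
  then show ?thesis using r0 assms(1) by auto
qed

lemma part_pos_len: "0 < part l a \<Longrightarrow> a \<le> length l"
  using part_zero[of l a] by (cases "a \<le> length l") auto

lemma card_diagram:
  assumes "length l \<le> N"
  shows "card (diagram l) = (\<Sum>r\<in>{1..N}. part l r)"
proof -
  have "diagram l = Sigma {1..N} (\<lambda>r. {r<..r + part l r})"
  proof (intro set_eqI iffI)
    fix x assume "x \<in> diagram l" then show "x \<in> Sigma {1..N} (\<lambda>r. {r<..r + part l r})"
      using assms by (cases x) (auto simp: mem_diagram)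
  next
    fix x assume x: "x \<in> Sigma {1..N} (\<lambda>r. {r<..r + part l r})"
    then have "0 < part l (fst x)" by (cases x) auto
    then show "x \<in> diagram l" using x part_pos_len[of l "fst x"] by (cases x) (auto simp: mem_diagram)
  qed
  then have "card (diagram l) = (\<Sum>r\<in>{1..N}. card {r<..r + part l r})" by (simp add: card_SigmaI)
  then show ?thesis by simp
qed

lemma finite_diagram: "finite (diagram l)"
  by (rule finite_subset[of _ "Sigma {1..length l} (\<lambda>r. {r<..r + part l r})"]) (auto simp: mem_diagram)

context fixes l :: "nat list" assumes sp: "strict_partition l"
begin

lemma strict_inc:
  assumes i: "1 \<le> i" "i \<le> length l + 1" and ok: "okpos l i"
  shows "strict_partition (inc l i)"
proof (rule strict_by_part)
  fix r assume r: "1 \<le> r" "r < length (inc l i)"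
  show "part (inc l i) (Suc r) < part (inc l i) r"
  proof (cases "Suc r = i")
    case True
    then show ?thesis using ok r unfolding part_inc[OF i] okpos_def by auto
  next
    case False
    show ?thesis
    proof (cases "r = i")
      case True
      then show ?thesis unfolding part_inc[OF i] using part_Suc_le[OF sp, of i] i by auto
    next
      case False
      have "r < length l" using r \<open>Suc r \<noteq> i\<close> i unfolding len_inc by (auto split: if_splits)
      then show ?thesis unfolding part_inc[OF i] using False \<open>Suc r \<noteq> i\<close> part_less[OF sp, of r "Suc r"] r by auto
    qed
  qed
next
  fix r assume r: "1 \<le> r" "r \<le> length (inc l i)"
  show "0 < part (inc l i) r"
  proof (cases "r = i")
    case False
    then have "r \<le> length l" using r i unfolding len_inc by (auto split: if_splits)
    then show ?thesis unfolding part_inc[OF i] using False part_pos[OF sp] r by auto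
  qed (simp add: part_inc[OF i])
qed

lemma inc_in_add_box:
  assumes i: "1 \<le> i" "i \<le> length l + 1" and ok: "okpos l i"
  shows "inc l i \<in> add_box l"
proof -
  have sub: "diagram l \<subseteq> diagram (inc l i)" by (auto simp: mem_diagram' part_inc[OF i])
  have "diagram (inc l i) - diagram l = {(i, i + part l i + 1)}"
    using i by (auto simp: mem_diagram' part_inc[OF i] split: if_splits)
  then show ?thesis unfolding Defs.add_box_def using strict_inc[OF i ok] sub by simp
qed

lemma add_box_inc:
  assumes mu: "mu \<in> add_box l"
  shows "\<exists>i. 1 \<le> i \<and> i \<le> length l + 1 \<and> okpos l i \<and> mu = inc l i"
proof -
  have smu: "strict_partition mu" and sub: "diagram l \<subseteq> diagram mu" and c1: "card (diagram mu - diagram l) = 1"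
    using mu unfolding Defs.add_box_def by auto
  have le: "part l r \<le> part mu r" if "1 \<le> r" for r
  proof (cases "part l r = 0")
    case False
    then have "(r, r + part l r) \<in> diagram l" using that by (auto simp: mem_diagram')
    then have "(r, r + part l r) \<in> diagram mu" using sub by auto
    then show ?thesis by (auto simp: mem_diagram')
  qed simp
  define N where "N = length l + length mu + 1"
  have "card (diagram mu) - card (diagram l) = 1"
    using c1 card_Diff_subset[OF finite_subset[OF sub finite_diagram] sub] by simp
  then have "(\<Sum>r\<in>{1..N}. part mu r) - (\<Sum>r\<in>{1..N}. part l r) = 1"
    using card_diagram[of l N] card_diagram[of mu N] unfolding N_def by simp
  moreover have "(\<Sum>r\<in>{1..N}. part mu r) = (\<Sum>r\<in>{1..N}. part mu r - part l r) + (\<Sum>r\<in>{1..N}. part l r)"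
    using le by (simp add: sum.distrib[symmetric])
  ultimately have "(\<Sum>r\<in>{1..N}. part mu r - part l r) = 1" by simp
  from sum_eq_1[OF _ this] obtain r0 where r0: "r0 \<in> {1..N}" "part mu r0 - part l r0 = 1" and
    rest0: "\<forall>r\<in>{1..N} - {r0}. part mu r - part l r = 0"
    by blast
  have rest: "part mu r - part l r = 0" if "r \<in> {1..N} - {r0}" for r using rest0 that by blast
  have pm: "part mu r = (if r = r0 then part l r0 + 1 else part l r)" if "1 \<le> r" for r
  proof (cases "r \<le> N")
    case True
    then show ?thesis using r0 rest[of r] le[OF that] that by auto
  next
    case False
    then show ?thesis using part_zero[of l r] part_zero[of mu r] r0 unfolding N_def by auto
  qed
  have r0pos: "1 \<le> r0" using r0 by auto
  have "r0 \<le> length mu" using pm[OF r0pos] part_zero[of mu r0] by (cases "r0 \<le> length mu") auto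
  have r0le: "r0 \<le> length l + 1"
  proof (rule ccontr)
    assume "\<not> r0 \<le> length l + 1"
    then have "0 < part mu (length l + 1)" using part_pos[OF smu, of "length l + 1"] \<open>r0 \<le> length mu\<close> by auto
    moreover have "part mu (length l + 1) = 0" using pm[of "length l + 1"] \<open>\<not> r0 \<le> length l + 1\<close> part_zero[of l "length l + 1"] by auto
    ultimately show False by simp
  qed
  have ok: "okpos l r0"
  proof (cases "r0 = 1")
    case False
    then have r2: "1 \<le> r0 - 1" "Suc (r0 - 1) = r0" using r0pos by auto
    have "part mu r0 \<le> part mu (r0 - 1)" using part_Suc_le[OF smu r2(1)] r2 by simp
    then have "0 < part mu (r0 - 1)" using pm[OF r0pos] by auto
    then have "part mu r0 < part mu (r0 - 1)" using part_Suc_le[OF smu r2(1)] r2 by simp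
    moreover have "r0 - 1 \<noteq> r0" using r0pos by simp
    then have "part mu (r0 - 1) = part l (r0 - 1)" using pm[OF r2(1)] by presburger
    ultimately show ?thesis using pm[OF r0pos] unfolding okpos_def by simp
  qed (simp add: okpos_def)
  have "mu = inc l r0"
    by (rule part_eq_list[OF smu strict_inc[OF r0pos r0le ok]]) (simp add: pm part_inc[OF r0pos r0le])
  then show ?thesis using r0pos r0le ok by blast
qed

lemma inc_inj: "inj_on (inc l) {1..length l + 1}"
proof (rule inj_onI)
  fix i j assume ij: "i \<in> {1..length l + 1}" "j \<in> {1..length l + 1}" "inc l i = inc l j"
  show "i = j"
  proof (rule ccontr)
    assume "i \<noteq> j"
    have "part (inc l i) i = part l i + 1" using part_inc[of i l i] ij by auto
    moreover have "part (inc l j) i = part l i" using part_inc[of j l i] ij \<open>i \<noteq> j\<close> by auto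
    ultimately show False using ij by simp
  qed
qed

lemma add_box_eq: "add_box l = inc l ` {i \<in> {1..length l + 1}. okpos l i}"
  using add_box_inc inc_in_add_box by fastforce

end


context fixes l :: "nat list" assumes sp: "strict_partition l"
begin

lemma part_ext_le: "1 \<le> i \<Longrightarrow> i \<le> length l + 1 \<Longrightarrow> 2 \<le> i \<Longrightarrow> part l i + 1 \<le> part l (i - 1)"
proof -
  assume i: "1 \<le> i" "i \<le> length l + 1" "2 \<le> i"
  show ?thesis
  proof (cases "i \<le> length l")
    case True
    then show ?thesis using part_gap[OF sp, of "i - 1" i] i by auto
  next
    case False
    then have "i = length l + 1" using i by simp
    then show ?thesis using part_pos[OF sp, of "length l"] part_zero[of l i] i by auto
  qed
qed

lemma okpos_iff:
  assumes i: "1 \<le> i" "i \<le> length l + 1"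
  shows "okpos l i \<longleftrightarrow> part l i + 1 \<notin> set l"
proof
  assume ok: "okpos l i"
  show "part l i + 1 \<notin> set l"
  proof
    assume "part l i + 1 \<in> set l"
    then obtain j where j: "j \<in> {1..length l}" "part l j = part l i + 1" using set_part[OF sp] by auto
    show False
    proof (cases "i \<le> j")
      case True
      then have "part l j \<le> part l i" using part_gap[OF sp, of i j] j i by auto
      then show False using j by simp
    next
      case False
      then have "2 \<le> i" "j \<le> i - 1" using j by auto
      have "part l (i - 1) + (i - 1 - j) \<le> part l j"
        by (rule part_gap[OF sp]) (use j i \<open>j \<le> i - 1\<close> in auto)
      then have "part l (i - 1) \<le> part l j" by simp
      then show False using ok j \<open>2 \<le> i\<close> unfolding okpos_def by auto
    qed
  qed
next
  assume "part l i + 1 \<notin> set l"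
  show "okpos l i"
  proof (rule ccontr)
    assume nok: "\<not> okpos l i"
    then have i2: "2 \<le> i" using i unfolding okpos_def by auto
    then have "part l (i - 1) = part l i + 1" using part_ext_le[OF i i2] nok unfolding okpos_def by auto
    moreover have "part l (i - 1) \<in> set l" unfolding set_part[OF sp] by (rule imageI) (use i i2 in auto)
    ultimately show False using \<open>part l i + 1 \<notin> set l\<close> by simp
  qed
qed

lemma set_inc:
  assumes i: "1 \<le> i" "i \<le> length l + 1"
  shows "set (inc l i) = insert (part l i + 1) (set l - {part l i})"
proof (cases "i \<le> length l")
  case True
  have d: "distinct l"
  proof -
    have "sorted_wrt (<) (rev l)" using sp unfolding Defs.strict_partition_def by (simp add: sorted_wrt_rev)
    then show ?thesis by (simp add: strict_sorted_iff)
  qed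
  have "part l i = l ! (i - 1)" using i True unfolding Defs.part_def by auto
  then show ?thesis unfolding inc_def using True i set_update_distinct[OF d, of "i - 1"] by auto
next
  case False
  then have "part l i = 0" by (simp add: part_zero)
  moreover have "0 \<notin> set l" using sp unfolding Defs.strict_partition_def by auto
  ultimately show ?thesis unfolding inc_def using False by auto
qed

lemma part_inj_ext: "inj_on (part l) {1..length l + 1}"
proof -
  have "part l (length l + 1) \<notin> part l ` ({1..length l} - {length l + 1})"
    using part_pos[OF sp] part_zero[of l "length l + 1"] by force
  then have inj: "inj_on (part l) (insert (length l + 1) {1..length l})"
    using part_inj[OF sp] by (simp only: inj_on_insert) simp
  have eq: "{1..length l + 1} = insert (length l + 1) {1..length l}" by auto
  show ?thesis unfolding eq by (rule inj)
qed

lemma part_img_ext: "part l ` {1..length l + 1} = insert 0 (set l)"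
proof -
  have "{1..length l + 1} = insert (length l + 1) {1..length l}" by auto
  then show ?thesis using set_part[OF sp] part_zero[of l "length l + 1"] by simp
qed

lemma Dop_set:
  assumes GF: "\<And>mu. strict_partition mu \<Longrightarrow> G mu = F (set mu)"
  shows "Dop G l = (\<Sum>a\<in>{a \<in> insert 0 (set l). a + 1 \<notin> set l}.
            (if a = 0 then 1 else 2) * F (insert (a + 1) (set l - {a}))) - F (set l)"
proof -
  define OK where "OK = {i \<in> {1..length l + 1}. okpos l i}"
  have injOK: "inj_on (inc l) B" if "B \<subseteq> OK" for B
    by (rule inj_on_subset[OF inc_inj[OF sp]]) (use that in \<open>auto simp: OK_def\<close>)
  have e1: "{mu \<in> add_box l. length mu > length l} = inc l ` {i \<in> OK. \<not> i \<le> length l}"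
    unfolding add_box_eq[OF sp] OK_def by (auto simp: len_inc)
  have e2: "{mu \<in> add_box l. length mu = length l} = inc l ` {i \<in> OK. i \<le> length l}"
    unfolding add_box_eq[OF sp] OK_def by (auto simp: len_inc split: if_splits)
  have GI: "G (inc l i) = F (set (inc l i))" if "i \<in> OK" for i
    using GF strict_inc[OF sp] that unfolding OK_def by auto
  have "Dop G l = (\<Sum>i\<in>{i \<in> OK. \<not> i \<le> length l}. G (inc l i)) + 2 * (\<Sum>i\<in>{i \<in> OK. i \<le> length l}. G (inc l i)) - G l"
    unfolding Defs.Dop_def e1 e2 by (simp add: sum.reindex[OF injOK])
  also have "(\<Sum>i\<in>{i \<in> OK. \<not> i \<le> length l}. G (inc l i)) + 2 * (\<Sum>i\<in>{i \<in> OK. i \<le> length l}. G (inc l i))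
     = (\<Sum>i\<in>OK. (if i \<le> length l then 2 else 1) * G (inc l i))"
  proof -
    have f: "finite OK" unfolding OK_def by auto
    have "(\<Sum>i\<in>OK. (if i \<le> length l then 2 else 1) * G (inc l i))
        = (\<Sum>i\<in>OK. if i \<le> length l then 2 * G (inc l i) else G (inc l i))"
      by (rule sum.cong) auto
    also have "\<dots> = (\<Sum>i\<in>OK \<inter> {i. i \<le> length l}. 2 * G (inc l i)) + (\<Sum>i\<in>OK \<inter> - {i. i \<le> length l}. G (inc l i))"
      by (rule sum.If_cases) (rule f)
    also have "OK \<inter> {i. i \<le> length l} = {i \<in> OK. i \<le> length l}" by auto
    also have "OK \<inter> - {i. i \<le> length l} = {i \<in> OK. \<not> i \<le> length l}" by auto
    finally have "(\<Sum>i\<in>OK. (if i \<le> length l then 2 else 1) * G (inc l i))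
        = (\<Sum>i\<in>{i \<in> OK. i \<le> length l}. 2 * G (inc l i)) + (\<Sum>i\<in>{i \<in> OK. \<not> i \<le> length l}. G (inc l i))" .
    then show ?thesis by (simp add: sum_distrib_left)
  qed
  also have "(\<Sum>i\<in>OK. (if i \<le> length l then 2 else 1) * G (inc l i))
      = (\<Sum>i\<in>OK. (\<lambda>a. (if a = 0 then 1 else 2) * F (insert (a + 1) (set l - {a}))) (part l i))"
  proof (rule sum.cong)
    fix i assume i: "i \<in> OK"
    have "(i \<le> length l) = (part l i \<noteq> 0)"
      using part_pos[OF sp, of i] part_zero[of l i] i unfolding OK_def by (cases "i \<le> length l") auto
    then show "(if i \<le> length l then 2 else 1) * G (inc l i) = (\<lambda>a. (if a = 0 then 1 else 2) * F (insert (a + 1) (set l - {a}))) (part l i)"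
      using GI[OF i] set_inc[of i] i unfolding OK_def by auto
  qed simp
  also have "\<dots> = (\<Sum>a\<in>part l ` OK. (if a = 0 then 1 else 2) * F (insert (a + 1) (set l - {a})))"
  proof -
    have injp: "inj_on (part l) OK" by (rule inj_on_subset[OF part_inj_ext]) (auto simp: OK_def)
    show ?thesis using sum.reindex[OF injp, of "\<lambda>a. (if a = 0 then 1 else 2) * F (insert (a + 1) (set l - {a}))"]
      by (simp add: comp_def)
  qed
  also have "part l ` OK = {a \<in> insert 0 (set l). a + 1 \<notin> set l}"
  proof -
    have "part l ` OK = {a \<in> part l ` {1..length l + 1}. a + 1 \<notin> set l}"
      unfolding OK_def using okpos_iff by auto
    then show ?thesis unfolding part_img_ext .
  qed
  finally show ?thesis using GF[OF sp] by simp
qed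

end


definition gg :: "nat \<Rightarrow> nat \<Rightarrow> rat" where
  "gg c b = (if b < c then (of_nat c + of_nat b) / (of_nat c - of_nat b) else (of_nat c + of_nat b) / (of_nat b - of_nat c))"

lemma gg_pos: "b \<noteq> c \<Longrightarrow> 0 < b + c \<Longrightarrow> 0 < gg c b"
  unfolding gg_def by (auto intro!: divide_pos_pos)

lemma Hs_pos: "finite S \<Longrightarrow> 0 < Hs S"
  unfolding Hs_def by (intro prod_pos mult_pos_pos) (auto intro!: divide_pos_pos)

lemma Hs_insert:
  assumes "finite R" "c \<notin> R"
  shows "Hs (insert c R) = Hs R * fact c * (\<Prod>b\<in>R. gg c b)"
proof -
  define \<rho> :: "nat \<Rightarrow> nat \<Rightarrow> rat" where "\<rho> a b = (of_nat a + of_nat b) / (of_nat a - of_nat b)" for a b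
  have e1: "{b \<in> insert c R. b < c} = {b \<in> R. b < c}" by auto
  have e2: "(\<Prod>b\<in>{b \<in> insert c R. b < a}. \<rho> a b) = (if c < a then \<rho> a c else 1) * (\<Prod>b\<in>{b \<in> R. b < a}. \<rho> a b)"
    if "a \<in> R" for a
  proof (cases "c < a")
    case True
    then have "{b \<in> insert c R. b < a} = insert c {b \<in> R. b < a}" by auto
    then show ?thesis using True assms by simp
  next
    case False
    then have "{b \<in> insert c R. b < a} = {b \<in> R. b < a}" by auto
    then show ?thesis using False by simp
  qed
  have "Hs (insert c R) = (fact c * (\<Prod>b\<in>{b \<in> R. b < c}. \<rho> c b)) * (\<Prod>a\<in>R. fact a * (\<Prod>b\<in>{b \<in> insert c R. b < a}. \<rho> a b))"
    unfolding Hs_def \<rho>_def[symmetric] using assms e1 by simp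
  also have "(\<Prod>a\<in>R. fact a * (\<Prod>b\<in>{b \<in> insert c R. b < a}. \<rho> a b))
      = (\<Prod>a\<in>R. (if c < a then \<rho> a c else 1) * (fact a * (\<Prod>b\<in>{b \<in> R. b < a}. \<rho> a b)))"
    using e2 by (intro prod.cong) (auto simp: algebra_simps)
  also have "\<dots> = (\<Prod>a\<in>R. (if c < a then \<rho> a c else 1)) * Hs R"
    unfolding Hs_def \<rho>_def[symmetric] by (simp add: prod.distrib)
  also have "(\<Prod>a\<in>R. (if c < a then \<rho> a c else 1)) = (\<Prod>a\<in>{a \<in> R. c < a}. \<rho> a c)"
    using assms(1) by (simp add: prod.If_cases Int_def)
  finally have A: "Hs (insert c R) = Hs R * fact c * ((\<Prod>b\<in>{b \<in> R. b < c}. \<rho> c b) * (\<Prod>a\<in>{a \<in> R. c < a}. \<rho> a c))"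
    by (simp add: algebra_simps)
  have "(\<Prod>b\<in>R. gg c b) = (\<Prod>b\<in>R. if b < c then \<rho> c b else \<rho> b c)"
    unfolding gg_def \<rho>_def by (intro prod.cong) (auto simp: add.commute)
  also have "\<dots> = (\<Prod>b\<in>R \<inter> {b. b < c}. \<rho> c b) * (\<Prod>b\<in>R \<inter> - {b. b < c}. \<rho> b c)"
    by (rule prod.If_cases) (rule assms(1))
  also have "R \<inter> {b. b < c} = {b \<in> R. b < c}" by auto
  also have "R \<inter> - {b. b < c} = {a \<in> R. c < a}" using assms(2) by (auto simp: not_less order.order_iff_strict)
  finally show ?thesis using A by simp
qed

definition Res :: "nat set \<Rightarrow> nat \<Rightarrow> rat" where
  "Res S a = (\<Prod>b\<in>S. T a - T (b - 1)) / (\<Prod>a'\<in>insert 0 S - {a}. T a - T a')"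

lemma T_diff: "T a - T b = (of_nat a - of_nat b) * (of_nat a + of_nat b + 1) / 2"
  unfolding T_def by (simp add: field_simps)

lemma T_diff1: "1 \<le> b \<Longrightarrow> T a - T (b - 1) = (of_nat a - of_nat b + 1) * (of_nat a + of_nat b) / 2"
  unfolding T_def by (simp add: field_simps of_nat_diff)

lemma fr4: fixes a b :: rat assumes "a - b \<noteq> 0" "a + 1 - b \<noteq> 0" "a + b + 1 \<noteq> 0" "a + 1 + b \<noteq> 0"
  shows "((a - b + 1) * (a + b) / 2) / ((a - b) * (a + b + 1) / 2) = ((a + b) / (a - b)) / ((a + 1 + b) / (a + 1 - b))"
proof -
  have "((a - b + 1) * (a + b) / 2) / ((a - b) * (a + b + 1) / 2) = ((a - b + 1) * (a + b)) / ((a - b) * (a + b + 1))" by simp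
  also have "((a + b) / (a - b)) / ((a + 1 + b) / (a + 1 - b)) = ((a + b) * (a + 1 - b)) / ((a - b) * (a + 1 + b))" by simp
  moreover have "((a - b + 1) * (a + b)) / ((a - b) * (a + b + 1)) = ((a + b) * (a + 1 - b)) / ((a - b) * (a + 1 + b))"
    by (simp add: algebra_simps)
  ultimately show ?thesis by simp
qed

lemma fr5: fixes a b :: rat
  shows "((a - b + 1) * (a + b) / 2) / ((a - b) * (a + b + 1) / 2) = ((a + b) / (b - a)) / ((a + 1 + b) / (b - (a + 1)))"
proof -
  have "((a - b + 1) * (a + b) / 2) / ((a - b) * (a + b + 1) / 2) = ((a - b + 1) * (a + b)) / ((a - b) * (a + b + 1))" by simp
  also have "((a + b) / (b - a)) / ((a + 1 + b) / (b - (a + 1))) = ((a + b) * (b - (a + 1))) / ((b - a) * (a + 1 + b))" by simp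
  moreover have "((a - b + 1) * (a + b)) / ((a - b) * (a + b + 1)) = ((a + b) * (b - (a + 1))) / ((b - a) * (a + 1 + b))"
  proof -
    have "((a + b) * (b - (a + 1))) = (-1) * ((a - b + 1) * (a + b))" by (simp add: algebra_simps)
    moreover have "((b - a) * (a + 1 + b)) = (-1) * ((a - b) * (a + b + 1))" by (simp add: algebra_simps)
    ultimately show ?thesis by (simp only:) simp
  qed
  ultimately show ?thesis by simp
qed

lemma per_b:
  assumes "1 \<le> b" "b \<noteq> a" "b \<noteq> a + 1"
  shows "(T a - T (b - 1)) / (T a - T b) = gg a b / gg (a + 1) b"
proof -
  have e1: "T a - T (b - 1) = (of_nat a - of_nat b + 1) * (of_nat a + of_nat b) / 2" using T_diff1[OF assms(1)] .
  have e2: "T a - T b = (of_nat a - of_nat b) * (of_nat a + of_nat b + 1) / 2" using T_diff .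
  show ?thesis
  proof (cases "b < a")
    case True
    then have g1: "gg a b = (of_nat a + of_nat b) / (of_nat a - of_nat b)" and g2: "gg (a + 1) b = (of_nat a + 1 + of_nat b) / (of_nat a + 1 - of_nat b)"
      unfolding gg_def by (auto simp: algebra_simps)
    have n1: "(of_nat a :: rat) - of_nat b \<noteq> 0" "(of_nat a :: rat) + 1 - of_nat b \<noteq> 0" using True by auto
    have n2: "(of_nat a :: rat) + of_nat b + 1 \<noteq> 0" "(of_nat a :: rat) + 1 + of_nat b \<noteq> 0" by (simp_all add: add_nonneg_eq_0_iff)
    show ?thesis unfolding e1 e2 g1 g2 by (rule fr4[OF n1 n2])
  next
    case False
    then have "b > a + 1" using assms by auto
    then have "gg a b = (of_nat a + of_nat b) / (of_nat b - of_nat a)" "gg (a + 1) b = (of_nat a + 1 + of_nat b) / (of_nat b - (of_nat a + 1))"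
      unfolding gg_def by (auto simp: algebra_simps)
    then show ?thesis unfolding e1 e2 by (simp only: fr5)
  qed
qed

lemma Res_zero:
  assumes "finite S" "a + 1 \<in> S"
  shows "Res S a = 0"
proof -
  have "(\<Prod>b\<in>S. T a - T (b - 1)) = 0" using assms by (intro prod_zero bexI[of _ "a + 1"]) auto
  then show ?thesis unfolding Res_def by simp
qed

lemma Res_pos_case:
  assumes S: "finite S" "0 \<notin> S" and a: "a \<in> S" "a + 1 \<notin> S"
  shows "Res S a = 2 * Hs S / Hs (insert (a + 1) (S - {a}))"
proof -
  define R where "R = S - {a}"
  have R: "finite R" "a \<notin> R" "a + 1 \<notin> R" "0 \<notin> R" using S a by (simp_all add: R_def)
  have SR: "S = insert a R" using a by (auto simp: R_def)
  have a1: "1 \<le> a" using a S by (cases a) auto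
  have Ta: "T a - T (a - 1) = of_nat a" unfolding T_diff1[OF a1] by (simp add: field_simps)
  have Ta0: "T a - T 0 = of_nat a * (of_nat a + 1) / 2" unfolding T_def by simp
  have den: "insert 0 S - {a} = insert 0 R" using SR S a1 R by auto
  have nz: "T a - T b \<noteq> 0" if "b \<in> R" for b
    using that R unfolding T_diff by (auto simp: add_nonneg_eq_0_iff)
  have num: "(\<Prod>b\<in>S. T a - T (b - 1)) = of_nat a * (\<Prod>b\<in>R. T a - T (b - 1))"
    unfolding SR using R Ta by simp
  have dn: "(\<Prod>a'\<in>insert 0 S - {a}. T a - T a') = (of_nat a * (of_nat a + 1) / 2) * (\<Prod>b\<in>R. T a - T b)"
    unfolding den using R by (simp add: Ta0)
  have "Res S a = (of_nat a * (\<Prod>b\<in>R. T a - T (b - 1))) / (of_nat a * (of_nat a + 1) / 2 * (\<Prod>b\<in>R. T a - T b))"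
    unfolding Res_def num dn ..
  also have "\<dots> = (\<Prod>b\<in>R. T a - T (b - 1)) / ((of_nat a + 1) / 2 * (\<Prod>b\<in>R. T a - T b))"
  proof -
    have "(of_nat a :: rat) \<noteq> 0" using a1 by simp
    then show ?thesis by (simp add: mult.assoc)
  qed
  also have "\<dots> = 2 / (of_nat a + 1) * ((\<Prod>b\<in>R. T a - T (b - 1)) / (\<Prod>b\<in>R. T a - T b))"
    by simp
  also have "(\<Prod>b\<in>R. T a - T (b - 1)) / (\<Prod>b\<in>R. T a - T b) = (\<Prod>b\<in>R. (T a - T (b - 1)) / (T a - T b))"
    by (simp add: prod_dividef)
  also have "\<dots> = (\<Prod>b\<in>R. gg a b / gg (a + 1) b)"
  proof (rule prod.cong)
    fix b assume b: "b \<in> R"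
    have "1 \<le> b" using b R by (cases b) auto
    then show "(T a - T (b - 1)) / (T a - T b) = gg a b / gg (a + 1) b" using per_b[of b a] b R by auto
  qed simp
  also have "\<dots> = (\<Prod>b\<in>R. gg a b) / (\<Prod>b\<in>R. gg (a + 1) b)" by (simp add: prod_dividef)
  finally have res: "Res S a = 2 / (of_nat a + 1) * ((\<Prod>b\<in>R. gg a b) / (\<Prod>b\<in>R. gg (a + 1) b))" .
  have h1: "Hs S = Hs R * fact a * (\<Prod>b\<in>R. gg a b)" unfolding SR using Hs_insert[OF R(1,2)] .
  have h2: "Hs (insert (a + 1) (S - {a})) = Hs R * fact (a + 1) * (\<Prod>b\<in>R. gg (a + 1) b)"
    unfolding R_def[symmetric] using Hs_insert[OF R(1,3)] .
  have p1: "0 < Hs R" using Hs_pos[OF R(1)] .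
  have p2: "0 < (\<Prod>b\<in>R. gg (a + 1) b)"
    using R by (intro prod_pos gg_pos) auto
  have fa: "(fact (a + 1) :: rat) = (of_nat a + 1) * fact a" by simp
  have fp: "(0::rat) < fact a" by simp
  define P1 where "P1 = (\<Prod>b\<in>R. gg a b)"
  define P2 where "P2 = (\<Prod>b\<in>R. gg (a + 1) b)"
  have hf: "Hs R * fact a \<noteq> 0" using p1 fp by simp
  have "2 * (Hs R * fact a * P1) / (Hs R * ((of_nat a + 1) * fact a) * P2)
      = (Hs R * fact a) * (2 * P1) / ((Hs R * fact a) * ((of_nat a + 1) * P2))" by (simp add: ac_simps)
  also have "\<dots> = (2 * P1) / ((of_nat a + 1) * P2)" by (rule mult_divide_mult_cancel_left[OF hf])
  also have "\<dots> = 2 / (of_nat a + 1) * (P1 / P2)" by simp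
  finally show ?thesis unfolding res h1 h2 fa P1_def[symmetric] P2_def[symmetric] by simp
qed

lemma Res_zero_case:
  assumes S: "finite S" "0 \<notin> S" "1 \<notin> S"
  shows "Res S 0 = Hs S / Hs (insert 1 S)"
proof -
  have b2: "2 \<le> b" if "b \<in> S" for b using S that by (cases b; cases "b - 1") auto
  have den: "insert 0 S - {0} = S" using S by auto
  have "Res S 0 = (\<Prod>b\<in>S. (T 0 - T (b - 1)) / (T 0 - T b))"
    unfolding Res_def den by (simp add: prod_dividef)
  also have "\<dots> = (\<Prod>b\<in>S. 1 / gg 1 b)"
  proof (rule prod.cong)
    fix b assume b: "b \<in> S"
    have "(of_nat b :: rat) - 1 \<noteq> 0" "(of_nat b :: rat) \<noteq> 0" "(of_nat b :: rat) + 1 \<noteq> 0" using b2[OF b] by auto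
    have t1: "T (b - 1) = (of_nat b - 1) * of_nat b / 2" unfolding T_def using b2[OF b] by (simp add: of_nat_diff)
    have t2: "T b = of_nat b * (of_nat b + 1) / 2" unfolding T_def by simp
    have g: "gg 1 b = (1 + of_nat b) / (of_nat b - 1)" unfolding gg_def using b2[OF b] by simp
    have t0: "T 0 = 0" unfolding T_def by simp
    define x :: rat where "x = of_nat b"
    have "(0 - (x - 1) * x / 2) / (0 - x * (x + 1) / 2) = ((x - 1) * x) / (x * (x + 1))" by simp
    also have "\<dots> = (x - 1) / (x + 1)" using \<open>(of_nat b :: rat) \<noteq> 0\<close> unfolding x_def by simp
    finally show "(T 0 - T (b - 1)) / (T 0 - T b) = 1 / gg 1 b"
      unfolding t0 t1 t2 g x_def by (simp add: add.commute)
  qed simp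
  also have "\<dots> = 1 / (\<Prod>b\<in>S. gg 1 b)" by (simp add: prod_dividef)
  also have "\<dots> = Hs S / Hs (insert 1 S)"
    using Hs_insert[OF S(1) S(3)] Hs_pos[OF S(1)] by simp
  finally show ?thesis .
qed

lemma Res_weight:
  assumes S: "finite S" "0 \<notin> S" and a: "a \<in> insert 0 S" "a + 1 \<notin> S"
  shows "Res S a = (if a = 0 then 1 else 2) * Hs S / Hs (insert (a + 1) (S - {a}))"
proof (cases "a = 0")
  case True
  then show ?thesis using Res_zero_case[OF S] a S by auto
next
  case False
  then show ?thesis using Res_pos_case[OF S _ a(2)] a by auto
qed


unbundle fps_syntax

lemma reflect_lin: "reflect_poly [:- c, 1:] = [:1, - (c::'a::field):]"
  by (simp add: reflect_poly_def)

lemma degree_lin_prod: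
  fixes c :: "'b \<Rightarrow> 'a::field"
  assumes "finite C"
  shows "degree (\<Prod>i\<in>C. [:- c i, 1:]) = card C"
  using assms
proof (induction C rule: finite_induct)
  case (insert a F)
  have nz: "(\<Prod>i\<in>F. [:- c i, 1:]) \<noteq> 0" using insert(1) by (simp add: prod_zero_iff)
  have "(\<Prod>i\<in>insert a F. [:- c i, 1:]) = [:- c a, 1:] * (\<Prod>i\<in>F. [:- c i, 1:])"
    by (rule prod.insert) (use insert in auto)
  moreover have "degree ([:- c a, 1:] * (\<Prod>i\<in>F. [:- c i, 1:])) = degree [:- c a, 1:] + degree (\<Prod>i\<in>F. [:- c i, 1:])"
    by (rule degree_mult_eq) (simp, rule nz)
  ultimately have "degree (\<Prod>i\<in>insert a F. [:- c i, 1:]) = degree [:- c a, 1:] + degree (\<Prod>i\<in>F. [:- c i, 1:])"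
    by simp
  then show ?case using insert by simp
qed simp

locale lag =
  fixes I :: "'a set" and J :: "'b set" and x :: "'a \<Rightarrow> 'c::field" and y :: "'b \<Rightarrow> 'c"
  assumes fI: "finite I" and fJ: "finite J" and injx: "inj_on x I" and cardIJ: "card I = card J + 1"
begin

definition Res :: "'a \<Rightarrow> 'c" where
  "Res i = (\<Prod>j\<in>J. x i - y j) / (\<Prod>i'\<in>I - {i}. x i - x i')"

definition Q :: "'a \<Rightarrow> 'c poly" where "Q i = (\<Prod>i'\<in>I - {i}. [:- x i', 1:])"
definition P :: "'c poly" where "P = (\<Prod>j\<in>J. [:- y j, 1:])"

lemma degQ: "i \<in> I \<Longrightarrow> degree (Q i) = card J"
  unfolding Q_def using degree_lin_prod[of "I - {i}" x] fI cardIJ by simp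

lemma degP: "degree P = card J"
  unfolding P_def using degree_lin_prod[OF fJ] .

lemma lagrange: "P = (\<Sum>i\<in>I. smult (Res i) (Q i))"
proof (rule ccontr)
  define D where "D = P - (\<Sum>i\<in>I. smult (Res i) (Q i))"
  assume "P \<noteq> (\<Sum>i\<in>I. smult (Res i) (Q i))"
  then have Dnz: "D \<noteq> 0" unfolding D_def by simp
  have degD: "degree D \<le> card J"
    unfolding D_def
    by (rule order.trans[OF degree_diff_le_max], rule max.boundedI)
       (auto simp: degP degQ intro!: degree_sum_le order.trans[OF degree_smult_le] fI)
  have roots: "x ` I \<subseteq> {z. poly D z = 0}"
  proof
    fix z assume "z \<in> x ` I"
    then obtain i0 where i0: "i0 \<in> I" "z = x i0" by auto
    have W: "(\<Prod>i'\<in>I - {i0}. x i0 - x i') \<noteq> 0"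
      using injx i0 fI by (auto simp: inj_on_def)
    have Qz: "poly (Q i) (x i0) = (if i = i0 then (\<Prod>i'\<in>I - {i0}. x i0 - x i') else 0)" if "i \<in> I" for i
    proof (cases "i = i0")
      case True then show ?thesis unfolding Q_def by (simp add: poly_prod)
    next
      case False
      then have "i0 \<in> I - {i}" using i0 by auto
      then have "(\<Prod>i'\<in>I - {i}. x i0 - x i') = 0" using fI by (intro prod_zero) auto
      then show ?thesis unfolding Q_def using False by (simp add: poly_prod)
    qed
    have "poly (\<Sum>i\<in>I. smult (Res i) (Q i)) (x i0) = (\<Sum>i\<in>I. Res i * poly (Q i) (x i0))"
      by (simp add: poly_sum)
    also have "\<dots> = (\<Sum>i\<in>I. if i = i0 then Res i0 * (\<Prod>i'\<in>I - {i0}. x i0 - x i') else 0)"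
      using Qz by (intro sum.cong) auto
    also have "\<dots> = Res i0 * (\<Prod>i'\<in>I - {i0}. x i0 - x i')" using i0 fI by simp
    also have "\<dots> = poly P (x i0)" unfolding Res_def P_def using W by (simp add: poly_prod)
    finally show "z \<in> {z. poly D z = 0}" unfolding D_def using i0 by simp
  qed
  have "card (x ` I) \<le> card {z. poly D z = 0}"
    by (rule card_mono[OF poly_roots_finite[OF Dnz] roots])
  also have "\<dots> \<le> degree D" by (rule card_poly_roots_bound[OF Dnz])
  finally show False using degD card_image[OF injx] cardIJ by simp
qed

definition Qr :: "'a \<Rightarrow> 'c poly" where "Qr i = (\<Prod>i'\<in>I - {i}. [:1, - x i':])"
definition Pr :: "'c poly" where "Pr = (\<Prod>j\<in>J. [:1, - y j:])"

lemma reflected: "Pr = (\<Sum>i\<in>I. smult (Res i) (Qr i))"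
proof (rule poly_eqI)
  fix k
  have rQ: "Qr i = reflect_poly (Q i)" for i unfolding Qr_def Q_def by (simp add: reflect_poly_prod reflect_lin)
  have rP: "Pr = reflect_poly P" unfolding Pr_def P_def by (simp add: reflect_poly_prod reflect_lin)
  have "coeff Pr k = (if k > card J then 0 else coeff P (card J - k))"
    unfolding rP coeff_reflect_poly degP ..
  also have "\<dots> = (\<Sum>i\<in>I. Res i * (if k > card J then 0 else coeff (Q i) (card J - k)))"
    by (subst lagrange) (simp add: coeff_sum)
  also have "\<dots> = (\<Sum>i\<in>I. Res i * coeff (Qr i) k)"
    by (intro sum.cong) (auto simp: rQ coeff_reflect_poly degQ)
  also have "\<dots> = coeff (\<Sum>i\<in>I. smult (Res i) (Qr i)) k" by (simp add: coeff_sum)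
  finally show "coeff Pr k = coeff (\<Sum>i\<in>I. smult (Res i) (Qr i)) k" .
qed

definition E :: "nat \<Rightarrow> 'c" where "E d = (\<Sum>i\<in>I. x i ^ d * Res i)"
definition pp :: "nat \<Rightarrow> 'c" where "pp k = (\<Sum>i\<in>I. x i ^ k) - (\<Sum>j\<in>J. y j ^ k)"

end

lemma fps_lin: "fps_of_poly [:1, - c:] = 1 - fps_const (c::'a::field) * fps_X"
  by (rule fps_ext) (auto simp: coeff_pCons split: nat.splits)

definition Gs :: "'a::field \<Rightarrow> 'a fps" where "Gs c = Abs_fps (\<lambda>n. c ^ n)"
definition Ms :: "'a::field \<Rightarrow> 'a fps" where "Ms c = Abs_fps (\<lambda>k. if k = 0 then 0 else c ^ k)"

lemma Gs_inv: "(1 - fps_const c * fps_X) * Gs c = 1"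
proof (rule fps_ext)
  fix n
  show "((1 - fps_const c * fps_X) * Gs c) $ n = (1 :: 'a fps) $ n"
    by (cases n) (simp_all add: algebra_simps Gs_def fps_mult_left_const_nth mult.assoc)
qed

lemma Ms_prop: "(1 - fps_const c * fps_X) * Ms c = fps_const c * fps_X"
proof (rule fps_ext)
  fix n
  show "((1 - fps_const c * fps_X) * Ms c) $ n = (fps_const c * fps_X) $ n"
  proof (cases n)
    case 0 then show ?thesis by (simp add: algebra_simps Ms_def mult.assoc)
  next
    case (Suc m)
    then show ?thesis by (cases m) (simp_all add: algebra_simps Ms_def mult.assoc)
  qed
qed

lemma prod_nth0:
  assumes "finite C"
  shows "(\<Prod>i\<in>C. 1 - fps_const (c i) * fps_X) $ 0 = (1::'a::field)"
  using assms by (induction C rule: finite_induct) auto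

lemma logderiv:
  fixes c :: "'b \<Rightarrow> 'a::field"
  assumes "finite C"
  shows "fps_X * fps_deriv (\<Prod>i\<in>C. 1 - fps_const (c i) * fps_X)
       = - (\<Prod>i\<in>C. 1 - fps_const (c i) * fps_X) * (\<Sum>i\<in>C. Ms (c i))"
  using assms
proof (induction C rule: finite_induct)
  case (insert a F)
  define L where "L = 1 - fps_const (c a) * fps_X"
  define PP where "PP = (\<Prod>i\<in>F. 1 - fps_const (c i) * fps_X)"
  define SS where "SS = (\<Sum>i\<in>F. Ms (c i))"
  have IH: "fps_X * fps_deriv PP = - PP * SS" using insert.IH unfolding PP_def SS_def .
  have "fps_deriv L = - fps_const (c a)" unfolding L_def by simp
  then have "fps_X * fps_deriv L = - (fps_const (c a) * fps_X)" by (simp add: mult.commute)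
  also have "\<dots> = - (L * Ms (c a))" using Ms_prop[of "c a"] unfolding L_def by simp
  finally have dL: "fps_X * fps_deriv L = - (L * Ms (c a))" .
  have "fps_X * fps_deriv (L * PP) = L * (fps_X * fps_deriv PP) + (fps_X * fps_deriv L) * PP"
    by (simp add: fps_deriv_mult algebra_simps)
  also have "\<dots> = - (L * PP) * (Ms (c a) + SS)" unfolding IH dL by (simp add: algebra_simps)
  finally show ?case using insert unfolding L_def PP_def SS_def by simp
qed simp

context lag
begin

definition F :: "'c fps" where "F = (\<Sum>i\<in>I. fps_const (Res i) * Gs (x i))"
definition Qt :: "'c fps" where "Qt = (\<Prod>i\<in>I. 1 - fps_const (x i) * fps_X)"
definition Pt :: "'c fps" where "Pt = (\<Prod>j\<in>J. 1 - fps_const (y j) * fps_X)"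

lemma F_nth: "F $ d = E d"
  unfolding F_def E_def by (simp add: fps_sum_nth Gs_def mult.commute)

lemma FQ: "F * Qt = Pt"
proof -
  have "Pt = fps_of_poly Pr" unfolding Pt_def Pr_def by (simp add: fps_of_poly_prod fps_lin)
  also have "\<dots> = (\<Sum>i\<in>I. fps_const (Res i) * (\<Prod>i'\<in>I - {i}. 1 - fps_const (x i') * fps_X))"
    unfolding reflected Qr_def by (simp add: fps_of_poly_sum fps_of_poly_smult fps_of_poly_prod fps_lin)
  also have "\<dots> = (\<Sum>i\<in>I. fps_const (Res i) * Gs (x i) * Qt)"
  proof (rule sum.cong)
    fix i assume i: "i \<in> I"
    have "Qt = (1 - fps_const (x i) * fps_X) * (\<Prod>i'\<in>I - {i}. 1 - fps_const (x i') * fps_X)"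
      unfolding Qt_def using prod.remove[OF fI i] .
    then have "Gs (x i) * Qt = (\<Prod>i'\<in>I - {i}. 1 - fps_const (x i') * fps_X)"
      using Gs_inv[of "x i"] by (simp add: mult.assoc[symmetric] mult.commute)
    then show "fps_const (Res i) * (\<Prod>i'\<in>I - {i}. 1 - fps_const (x i') * fps_X) = fps_const (Res i) * Gs (x i) * Qt"
      by (simp add: mult.assoc)
  qed simp
  also have "\<dots> = F * Qt" unfolding F_def by (simp add: sum_distrib_right)
  finally show ?thesis by simp
qed

lemma Qt_nz: "Qt \<noteq> 0"
proof -
  have "Qt $ 0 = 1" unfolding Qt_def by (rule prod_nth0[OF fI])
  then show ?thesis by auto
qed

lemma newton_fps: "fps_X * fps_deriv F = F * ((\<Sum>i\<in>I. Ms (x i)) - (\<Sum>j\<in>J. Ms (y j)))"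
proof -
  define MA where "MA = (\<Sum>i\<in>I. Ms (x i))"
  define MY where "MY = (\<Sum>j\<in>J. Ms (y j))"
  have dQ: "fps_X * fps_deriv Qt = - Qt * MA" unfolding Qt_def MA_def by (rule logderiv[OF fI])
  have dP: "fps_X * fps_deriv Pt = - Pt * MY" unfolding Pt_def MY_def by (rule logderiv[OF fJ])
  have "fps_X * fps_deriv (F * Qt) = fps_X * fps_deriv Pt" using FQ by simp
  then have "F * (fps_X * fps_deriv Qt) + (fps_X * fps_deriv F) * Qt = fps_X * fps_deriv Pt"
    by (simp add: fps_deriv_mult algebra_simps)
  then have "F * (- Qt * MA) + (fps_X * fps_deriv F) * Qt = - (F * Qt) * MY" unfolding dQ dP FQ .
  then have "Qt * (fps_X * fps_deriv F - F * (MA - MY)) = 0" by (simp add: algebra_simps)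
  then have "fps_X * fps_deriv F - F * (MA - MY) = 0" using Qt_nz by simp
  then show ?thesis unfolding MA_def MY_def by simp
qed

lemma E0: "E 0 = 1"
proof -
  have "(F * Qt) $ 0 = Pt $ 0" using FQ by simp
  moreover have "Qt $ 0 = 1" unfolding Qt_def by (rule prod_nth0[OF fI])
  moreover have "Pt $ 0 = 1" unfolding Pt_def by (rule prod_nth0[OF fJ])
  ultimately show ?thesis using F_nth[of 0] by simp
qed

lemma newton: "of_nat d * E d = (\<Sum>i<d. E i * pp (d - i))"
proof -
  define Lf where "Lf = (\<Sum>i\<in>I. Ms (x i)) - (\<Sum>j\<in>J. Ms (y j))"
  have Lnth: "Lf $ k = (if k = 0 then 0 else pp k)" for k
    unfolding Lf_def pp_def by (simp add: fps_sum_nth Ms_def)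
  have "(fps_X * fps_deriv F) $ d = (F * Lf) $ d" using newton_fps unfolding Lf_def by simp
  moreover have "(fps_X * fps_deriv F) $ d = of_nat d * E d"
    by (cases d) (simp_all add: fps_X_mult_nth F_nth)
  moreover have "(F * Lf) $ d = (\<Sum>i<d. E i * pp (d - i))"
  proof -
    have "(F * Lf) $ d = (\<Sum>i = 0..d. E i * Lf $ (d - i))" by (simp add: fps_mult_nth F_nth)
    also have "\<dots> = (\<Sum>i<Suc d. E i * Lf $ (d - i))" by (simp add: atLeast0AtMost lessThan_Suc_atMost)
    also have "\<dots> = (\<Sum>i<d. E i * Lf $ (d - i))" by (simp add: Lnth)
    also have "\<dots> = (\<Sum>i<d. E i * pp (d - i))" by (intro sum.cong) (auto simp: Lnth)
    finally show ?thesis .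
  qed
  ultimately show ?thesis by simp
qed

end


definition U :: "nat set set" where "U = {S. finite S \<and> 0 \<notin> S}"
definition Pq :: "nat list \<Rightarrow> nat set \<Rightarrow> rat" where "Pq d S = prod_list (map (\<lambda>k. Qs k S) d)"
definition Parts :: "nat \<Rightarrow> nat list set" where "Parts w = {d. int_partition d \<and> sum_list d \<le> w}"
definition genq :: "nat \<Rightarrow> (nat set \<Rightarrow> rat) \<Rightarrow> bool" where
  "genq w f \<longleftrightarrow> (\<exists>xi. \<forall>S\<in>U. f S = (\<Sum>d\<in>Parts w. xi d * Pq d S))"

lemma len_le_sum: "(\<forall>x\<in>set xs. 1 \<le> x) \<Longrightarrow> length xs \<le> sum_list (xs :: nat list)"
  by (induction xs) auto

lemma finite_Parts: "finite (Parts w)"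
proof -
  have "Parts w \<subseteq> {xs. set xs \<subseteq> {..w} \<and> length xs \<le> w}"
  proof
    fix d assume "d \<in> Parts w"
    then have d: "int_partition d" "sum_list d \<le> w" unfolding Parts_def by auto
    have "\<forall>x\<in>set d. 1 \<le> x" using d(1) unfolding Defs.int_partition_def by auto
    then have "length d \<le> w" using len_le_sum[of d] d(2) by simp
    moreover have "set d \<subseteq> {..w}" using member_le_sum_list[of _ d] d(2) by fastforce
    ultimately show "d \<in> {xs. set xs \<subseteq> {..w} \<and> length xs \<le> w}" by simp
  qed
  then show ?thesis by (rule finite_subset) (rule finite_lists_length_le, simp)
qed

lemma Parts_mono: "w \<le> w' \<Longrightarrow> Parts w \<subseteq> Parts w'"
  unfolding Parts_def by auto

lemma Parts0: "Parts 0 = {[]}"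
proof -
  have "d = []" if "int_partition d" "sum_list d = 0" for d
    using that unfolding Defs.int_partition_def by (cases d) auto
  moreover have "int_partition []" unfolding Defs.int_partition_def by simp
  ultimately show ?thesis unfolding Parts_def by auto
qed

lemma gq_mono: "genq w f \<Longrightarrow> w \<le> w' \<Longrightarrow> genq w' f"
proof -
  assume g: "genq w f" and ww: "w \<le> w'"
  from g obtain xi where xi: "\<forall>S\<in>U. f S = (\<Sum>d\<in>Parts w. xi d * Pq d S)" unfolding genq_def by blast
  have "(\<Sum>d\<in>Parts w'. (if d \<in> Parts w then xi d else 0) * Pq d S) = (\<Sum>d\<in>Parts w. xi d * Pq d S)" for S
  proof -
    have "(\<Sum>d\<in>Parts w'. (if d \<in> Parts w then xi d else 0) * Pq d S) = (\<Sum>d\<in>Parts w'. if d \<in> Parts w then xi d * Pq d S else 0)"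
      by (intro sum.cong) auto
    also have "\<dots> = (\<Sum>d\<in>Parts w' \<inter> Parts w. xi d * Pq d S)"
      by (rule sum.inter_restrict[symmetric]) (rule finite_Parts)
    also have "Parts w' \<inter> Parts w = Parts w" using Parts_mono[OF ww] by auto
    finally show ?thesis .
  qed
  then show ?thesis unfolding genq_def using xi by (intro exI[of _ "\<lambda>d. if d \<in> Parts w then xi d else 0"]) auto
qed

lemma gq_zero: "genq w (\<lambda>S. 0)"
  unfolding genq_def by (intro exI[of _ "\<lambda>d. 0"]) simp

lemma gq_add: "genq w f \<Longrightarrow> genq w g \<Longrightarrow> genq w (\<lambda>S. f S + g S)"
proof -
  assume "genq w f" "genq w g"
  then obtain xi1 xi2 where "\<forall>S\<in>U. f S = (\<Sum>d\<in>Parts w. xi1 d * Pq d S)" "\<forall>S\<in>U. g S = (\<Sum>d\<in>Parts w. xi2 d * Pq d S)"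
    unfolding genq_def by blast
  then show ?thesis unfolding genq_def
    by (intro exI[of _ "\<lambda>d. xi1 d + xi2 d"]) (simp add: sum.distrib distrib_right)
qed

lemma gq_smul: "genq w f \<Longrightarrow> genq w (\<lambda>S. c * f S)"
proof -
  assume "genq w f"
  then obtain xi where "\<forall>S\<in>U. f S = (\<Sum>d\<in>Parts w. xi d * Pq d S)" unfolding genq_def by blast
  then show ?thesis unfolding genq_def
    by (intro exI[of _ "\<lambda>d. c * xi d"]) (simp add: sum_distrib_left mult.assoc)
qed

lemma gq_cong: "genq w f \<Longrightarrow> (\<And>S. S \<in> U \<Longrightarrow> g S = f S) \<Longrightarrow> genq w g"
  unfolding genq_def by auto

lemma gq_const: "genq 0 (\<lambda>S. c)"
  unfolding genq_def Parts0 by (intro exI[of _ "\<lambda>d. c"]) (simp add: Pq_def)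

lemma gq_Q: "1 \<le> k \<Longrightarrow> genq k (Qs k)"
proof -
  assume k: "1 \<le> k"
  have mem: "[k] \<in> Parts k" unfolding Parts_def Defs.int_partition_def using k by auto
  have "Qs k S = (\<Sum>d\<in>Parts k. (if d = [k] then 1 else 0) * Pq d S)" for S
  proof -
    have "(\<Sum>d\<in>Parts k. (if d = [k] then 1 else 0) * Pq d S) = (\<Sum>d\<in>Parts k. if d = [k] then Pq d S else 0)"
      by (intro sum.cong) auto
    also have "\<dots> = Pq [k] S" using mem finite_Parts by (simp add: sum.delta')
    finally show ?thesis by (simp add: Pq_def)
  qed
  then show ?thesis unfolding genq_def by (intro exI[of _ "\<lambda>d. if d = [k] then 1 else 0"]) auto
qed

lemma gq_sum:
  assumes "finite A" "\<And>a. a \<in> A \<Longrightarrow> genq w (f a)"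
  shows "genq w (\<lambda>S. \<Sum>a\<in>A. f a S)"
  using assms
proof (induction A rule: finite_induct)
  case empty then show ?case by (simp add: gq_zero)
next
  case (insert a F)
  have "genq w (\<lambda>S. f a S + (\<Sum>a\<in>F. f a S))" by (rule gq_add) (use insert in auto)
  then show ?case using insert(1,2) by simp
qed

definition mrg :: "nat list \<times> nat list \<Rightarrow> nat list" where "mrg p = rev (sort (fst p @ snd p))"

lemma Pq_perm: "mset d1 = mset d2 \<Longrightarrow> Pq d1 S = Pq d2 S"
  unfolding Pq_def by (metis mset_map prod_mset_prod_list)

lemma Pq_mrg: "Pq (mrg (d1, d2)) S = Pq d1 S * Pq d2 S"
proof -
  have "Pq (mrg (d1, d2)) S = Pq (d1 @ d2) S" by (rule Pq_perm) (simp add: mrg_def)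
  then show ?thesis by (simp add: Pq_def)
qed

lemma Pq_mrg': "Pq (mrg p) S = Pq (fst p) S * Pq (snd p) S"
  using Pq_mrg[of "fst p" "snd p"] by simp

lemma mrg_Parts: "d1 \<in> Parts w1 \<Longrightarrow> d2 \<in> Parts w2 \<Longrightarrow> mrg (d1, d2) \<in> Parts (w1 + w2)"
proof -
  assume a: "d1 \<in> Parts w1" "d2 \<in> Parts w2"
  have "sorted_wrt (\<ge>) (rev (sort (d1 @ d2)))" by (simp add: sorted_wrt_rev)
  moreover have "\<forall>x\<in>set (mrg (d1, d2)). 0 < x" using a unfolding mrg_def Parts_def Defs.int_partition_def by auto
  moreover have "sum_list (mrg (d1, d2)) = sum_list d1 + sum_list d2"
    unfolding mrg_def by (simp add: sum_mset_sum_list[symmetric])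
  ultimately show ?thesis using a unfolding Parts_def Defs.int_partition_def mrg_def by auto
qed

lemma gq_mult:
  assumes "genq w1 f" "genq w2 g"
  shows "genq (w1 + w2) (\<lambda>S. f S * g S)"
proof -
  obtain xi1 where xi1: "\<forall>S\<in>U. f S = (\<Sum>d\<in>Parts w1. xi1 d * Pq d S)" using assms(1) unfolding genq_def by blast
  obtain xi2 where xi2: "\<forall>S\<in>U. g S = (\<Sum>d\<in>Parts w2. xi2 d * Pq d S)" using assms(2) unfolding genq_def by blast
  define PP where "PP = Parts w1 \<times> Parts w2"
  define c where "c p = xi1 (fst p) * xi2 (snd p)" for p
  define xi where "xi d = (\<Sum>p\<in>{p \<in> PP. mrg p = d}. c p)" for d
  have fPP: "finite PP" unfolding PP_def using finite_Parts by simp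
  have img: "mrg ` PP \<subseteq> Parts (w1 + w2)" unfolding PP_def using mrg_Parts by auto
  have "f S * g S = (\<Sum>d\<in>Parts (w1 + w2). xi d * Pq d S)" if S: "S \<in> U" for S
  proof -
    have "f S * g S = (\<Sum>d1\<in>Parts w1. \<Sum>d2\<in>Parts w2. (xi1 d1 * Pq d1 S) * (xi2 d2 * Pq d2 S))"
      using xi1 xi2 S by (simp add: sum_product)
    also have "\<dots> = (\<Sum>p\<in>PP. c p * Pq (mrg p) S)"
      unfolding PP_def c_def sum.cartesian_product
      by (intro sum.cong) (auto simp: Pq_mrg' algebra_simps)
    also have "\<dots> = (\<Sum>d\<in>Parts (w1 + w2). \<Sum>p\<in>{p \<in> PP. mrg p = d}. c p * Pq (mrg p) S)"
      by (rule sum.group[OF fPP finite_Parts img, symmetric])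
    also have "\<dots> = (\<Sum>d\<in>Parts (w1 + w2). xi d * Pq d S)"
      unfolding xi_def sum_distrib_right by (intro sum.cong) auto
    finally show ?thesis .
  qed
  then show ?thesis unfolding genq_def by blast
qed


definition gen :: "nat \<Rightarrow> (nat set \<Rightarrow> nat \<Rightarrow> rat) \<Rightarrow> bool" where
  "gen w f \<longleftrightarrow> (\<exists>g. (\<forall>e\<le>w. genq (w - e) (g e)) \<and> (\<forall>S\<in>U. \<forall>a. f S a = (\<Sum>e\<le>w. g e S * T a ^ e)))"

lemma gen_lift: "genq w h \<Longrightarrow> gen w (\<lambda>S a. h S)"
proof -
  assume h: "genq w h"
  define g :: "nat \<Rightarrow> nat set \<Rightarrow> rat" where "g e = (if e = 0 then h else (\<lambda>S. 0))" for e
  have "genq (w - e) (g e)" if "e \<le> w" for e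
    unfolding g_def using h gq_zero by auto
  moreover have "h S = (\<Sum>e\<le>w. g e S * T a ^ e)" for S a
  proof -
    have "(\<Sum>e\<le>w. g e S * T a ^ e) = (\<Sum>e\<le>w. if e = 0 then h S else 0)"
      unfolding g_def by (intro sum.cong) auto
    also have "\<dots> = h S" by (simp add: sum.delta)
    finally show ?thesis by simp
  qed
  ultimately show ?thesis unfolding gen_def by blast
qed

lemma gen_zero: "gen w (\<lambda>S a. 0)"
  unfolding gen_def by (intro exI[of _ "\<lambda>e S. 0"]) (simp add: gq_zero)

lemma gen_cong: "gen w f \<Longrightarrow> (\<And>S a. S \<in> U \<Longrightarrow> f' S a = f S a) \<Longrightarrow> gen w f'"
  unfolding gen_def by auto

lemma gen_add: "gen w f1 \<Longrightarrow> gen w f2 \<Longrightarrow> gen w (\<lambda>S a. f1 S a + f2 S a)"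
proof -
  assume "gen w f1" "gen w f2"
  then obtain g1 g2 where g1: "\<forall>e\<le>w. genq (w - e) (g1 e)" "\<forall>S\<in>U. \<forall>a. f1 S a = (\<Sum>e\<le>w. g1 e S * T a ^ e)"
    and g2: "\<forall>e\<le>w. genq (w - e) (g2 e)" "\<forall>S\<in>U. \<forall>a. f2 S a = (\<Sum>e\<le>w. g2 e S * T a ^ e)"
    unfolding gen_def by blast
  show ?thesis unfolding gen_def
    by (intro exI[of _ "\<lambda>e S. g1 e S + g2 e S"]) (use g1 g2 in \<open>auto intro: gq_add simp: sum.distrib distrib_right\<close>)
qed

lemma gen_smul: "gen w f \<Longrightarrow> gen w (\<lambda>S a. c * f S a)"
proof -
  assume "gen w f"
  then obtain g where g: "\<forall>e\<le>w. genq (w - e) (g e)" "\<forall>S\<in>U. \<forall>a. f S a = (\<Sum>e\<le>w. g e S * T a ^ e)"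
    unfolding gen_def by blast
  show ?thesis unfolding gen_def
    by (intro exI[of _ "\<lambda>e S. c * g e S"]) (use g in \<open>auto intro: gq_smul simp: sum_distrib_left mult.assoc\<close>)
qed

lemma gen_mono: "gen w f \<Longrightarrow> w \<le> w' \<Longrightarrow> gen w' f"
proof -
  assume "gen w f" and ww: "w \<le> w'"
  then obtain g where g: "\<forall>e\<le>w. genq (w - e) (g e)" "\<forall>S\<in>U. \<forall>a. f S a = (\<Sum>e\<le>w. g e S * T a ^ e)"
    unfolding gen_def by blast
  define g' where "g' e = (if e \<le> w then g e else (\<lambda>S. 0))" for e
  have "genq (w' - e) (g' e)" if "e \<le> w'" for e
    unfolding g'_def using g(1) ww by (auto intro: gq_mono gq_zero)
  moreover have "(\<Sum>e\<le>w'. g' e S * T a ^ e) = (\<Sum>e\<le>w. g e S * T a ^ e)" for S a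
  proof -
    have "(\<Sum>e\<le>w'. g' e S * T a ^ e) = (\<Sum>e\<le>w'. if e \<in> {..w} then g e S * T a ^ e else 0)"
      unfolding g'_def by (intro sum.cong) auto
    also have "\<dots> = (\<Sum>e\<in>{..w'} \<inter> {..w}. g e S * T a ^ e)" by (rule sum.inter_restrict[symmetric]) simp
    also have "{..w'} \<inter> {..w} = {..w}" using ww by auto
    finally show ?thesis .
  qed
  ultimately show ?thesis using g(2) unfolding gen_def by (intro exI[of _ g']) auto
qed

lemma gen_T: "gen 1 (\<lambda>S a. T a)"
proof -
  define g :: "nat \<Rightarrow> nat set \<Rightarrow> rat" where "g e = (if e = 1 then (\<lambda>S. 1) else (\<lambda>S. 0))" for e
  have "genq (1 - e) (g e)" if "e \<le> 1" for e
    using that unfolding g_def by (cases e) (auto intro: gq_const gq_zero)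
  moreover have "T a = (\<Sum>e\<le>1. g e S * T a ^ e)" for S a
    unfolding g_def by (simp add: atMost_Suc)
  ultimately show ?thesis unfolding gen_def by blast
qed

lemma gen_mult:
  assumes "gen w1 f1" "gen w2 f2"
  shows "gen (w1 + w2) (\<lambda>S a. f1 S a * f2 S a)"
proof -
  obtain g1 where g1: "\<forall>e\<le>w1. genq (w1 - e) (g1 e)" "\<forall>S\<in>U. \<forall>a. f1 S a = (\<Sum>e\<le>w1. g1 e S * T a ^ e)"
    using assms(1) unfolding gen_def by blast
  obtain g2 where g2: "\<forall>e\<le>w2. genq (w2 - e) (g2 e)" "\<forall>S\<in>U. \<forall>a. f2 S a = (\<Sum>e\<le>w2. g2 e S * T a ^ e)"
    using assms(2) unfolding gen_def by blast
  define PP where "PP = {..w1} \<times> {..w2}"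
  define h where "h p S = g1 (fst p) S * g2 (snd p) S" for p S
  define g where "g e S = (\<Sum>p\<in>{p \<in> PP. fst p + snd p = e}. h p S)" for e S
  have fPP: "finite PP" unfolding PP_def by simp
  have img: "(\<lambda>p. fst p + snd p) ` PP \<subseteq> {..w1 + w2}" unfolding PP_def by auto
  have "genq (w1 + w2 - e) (g e)" if "e \<le> w1 + w2" for e
    unfolding g_def
  proof (rule gq_sum)
    show "finite {p \<in> PP. fst p + snd p = e}" using fPP by simp
  next
    fix p assume p: "p \<in> {p \<in> PP. fst p + snd p = e}"
    then have "genq ((w1 - fst p) + (w2 - snd p)) (h p)" unfolding h_def PP_def
      by (intro gq_mult) (use g1 g2 in auto)
    moreover have "(w1 - fst p) + (w2 - snd p) = w1 + w2 - e" using p unfolding PP_def by auto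
    ultimately show "genq (w1 + w2 - e) (h p)" by simp
  qed
  moreover have "f1 S a * f2 S a = (\<Sum>e\<le>w1 + w2. g e S * T a ^ e)" if S: "S \<in> U" for S a
  proof -
    have "f1 S a * f2 S a = (\<Sum>e1\<le>w1. \<Sum>e2\<le>w2. (g1 e1 S * T a ^ e1) * (g2 e2 S * T a ^ e2))"
      using g1 g2 S by (simp add: sum_product)
    also have "\<dots> = (\<Sum>p\<in>PP. h p S * T a ^ (fst p + snd p))"
      unfolding PP_def h_def sum.cartesian_product by (intro sum.cong) (auto simp: power_add algebra_simps)
    also have "\<dots> = (\<Sum>e\<le>w1 + w2. \<Sum>p\<in>{p \<in> PP. fst p + snd p = e}. h p S * T a ^ (fst p + snd p))"
      by (rule sum.group[OF fPP _ img, symmetric]) simp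
    also have "\<dots> = (\<Sum>e\<le>w1 + w2. g e S * T a ^ e)"
      unfolding g_def sum_distrib_right by (intro sum.cong) auto
    finally show ?thesis .
  qed
  ultimately show ?thesis unfolding gen_def by blast
qed

lemma gen_sum:
  assumes "finite A" "\<And>x. x \<in> A \<Longrightarrow> gen w (f x)"
  shows "gen w (\<lambda>S a. \<Sum>x\<in>A. f x S a)"
  using assms
proof (induction A rule: finite_induct)
  case empty then show ?case by (simp add: gen_zero)
next
  case (insert b F)
  have "gen w (\<lambda>S a. f b S a + (\<Sum>x\<in>F. f x S a))" by (rule gen_add) (use insert in auto)
  then show ?case using insert(1,2) by simp
qed

lemma gen_pow: "gen 1 f \<Longrightarrow> gen n (\<lambda>S a. f S a ^ n)"
proof (induction n)
  case 0
  show ?case by (rule gen_cong[OF gen_lift[OF gq_const[of 1]]]) simp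
next
  case (Suc n)
  have "gen (1 + n) (\<lambda>S a. f S a * f S a ^ n)" by (rule gen_mult) (use Suc in auto)
  then show ?case by simp
qed

definition Es :: "nat \<Rightarrow> nat set \<Rightarrow> rat" where "Es d S = (\<Sum>a\<in>insert 0 S. T a ^ d * Res S a)"

lemma T_strict: "a < b \<Longrightarrow> T a < T b"
proof -
  assume "a < b"
  then have "a * (a + 1) < b * (b + 1)" by (intro mult_strict_mono) auto
  then have "(of_nat (a * (a + 1)) :: rat) < of_nat (b * (b + 1))" by (simp only: of_nat_less_iff)
  then have "(of_nat a * (of_nat a + 1) :: rat) < of_nat b * (of_nat b + 1)" by (simp add: algebra_simps)
  then show ?thesis unfolding T_def by (simp add: divide_strict_right_mono)
qed

lemma T_inj: "inj T"
  by (rule injI) (metis T_strict less_irrefl nat_neq_iff)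

lemma T0: "T 0 = 0" unfolding T_def by simp

lemma lag_inst: "S \<in> U \<Longrightarrow> lag (insert 0 S) S T"
  unfolding lag_def U_def using inj_on_subset[OF T_inj] by (auto simp: card_insert_if)

lemma Es_newton:
  assumes S: "S \<in> U"
  shows "Es 0 S = 1" "of_nat d * Es d S = (\<Sum>i<d. Es i S * Qs (d - i) S)"
proof -
  interpret lg: lag "insert 0 S" S T "\<lambda>b. T (b - 1)" by (rule lag_inst[OF S])
  have ResE: "lg.Res a = Res S a" for a unfolding lg.Res_def Res_def ..
  have EE: "lg.E d' = Es d' S" for d' unfolding lg.E_def Es_def ResE ..
  have pp: "lg.pp k = Qs k S" if "1 \<le> k" for k
  proof -
    have "0 \<notin> S" using S unfolding U_def by auto
    then have "lg.pp k = T 0 ^ k + (\<Sum>a\<in>S. T a ^ k) - (\<Sum>b\<in>S. T (b - 1) ^ k)"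
      unfolding lg.pp_def using S unfolding U_def by simp
    also have "\<dots> = Qs k S" unfolding Qs_def T0 using that by (simp add: sum_subtractf)
    finally show ?thesis .
  qed
  show "Es 0 S = 1" using lg.E0 EE by simp
  have "of_nat d * Es d S = (\<Sum>i<d. lg.E i * lg.pp (d - i))" using lg.newton[of d] EE by simp
  also have "\<dots> = (\<Sum>i<d. Es i S * Qs (d - i) S)" using EE pp by (intro sum.cong) auto
  finally show "of_nat d * Es d S = (\<Sum>i<d. Es i S * Qs (d - i) S)" .
qed

lemma Es_gen: "genq d (Es d)"
proof (induction d rule: less_induct)
  case (less d)
  show ?case
  proof (cases "d = 0")
    case True
    then show ?thesis using gq_cong[OF gq_const[of 1]] Es_newton(1) by auto
  next
    case False
    have "genq d (\<lambda>S. (1 / of_nat d) * (\<Sum>i<d. Es i S * Qs (d - i) S))"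
    proof (rule gq_smul, rule gq_sum)
      fix i assume i: "i \<in> {..<d}"
      have "genq (i + (d - i)) (\<lambda>S. Es i S * Qs (d - i) S)"
        by (rule gq_mult) (use less i in \<open>auto intro: gq_Q\<close>)
      then show "genq d (\<lambda>S. Es i S * Qs (d - i) S)" using i by simp
    qed simp
    moreover have "Es d S = (1 / of_nat d) * (\<Sum>i<d. Es i S * Qs (d - i) S)" if "S \<in> U" for S
      using Es_newton(2)[OF that, of d] False by (simp add: field_simps)
    ultimately show ?thesis by (rule gq_cong)
  qed
qed

lemma Res_sum1: "S \<in> U \<Longrightarrow> (\<Sum>a\<in>insert 0 S. Res S a) = 1"
  using Es_newton(1)[of S] unfolding Es_def by simp

lemma gen_sumRes:
  assumes "gen w f"
  shows "genq w (\<lambda>S. \<Sum>a\<in>insert 0 S. Res S a * f S a)"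
proof -
  obtain g where g: "\<forall>e\<le>w. genq (w - e) (g e)" "\<forall>S\<in>U. \<forall>a. f S a = (\<Sum>e\<le>w. g e S * T a ^ e)"
    using assms unfolding gen_def by blast
  have "genq w (\<lambda>S. \<Sum>e\<le>w. g e S * Es e S)"
  proof (rule gq_sum)
    fix e assume e: "e \<in> {..w}"
    have "genq ((w - e) + e) (\<lambda>S. g e S * Es e S)" by (rule gq_mult) (use g e Es_gen in auto)
    then show "genq w (\<lambda>S. g e S * Es e S)" using e by simp
  qed simp
  moreover have "(\<Sum>a\<in>insert 0 S. Res S a * f S a) = (\<Sum>e\<le>w. g e S * Es e S)" if S: "S \<in> U" for S
  proof -
    have "(\<Sum>a\<in>insert 0 S. Res S a * f S a) = (\<Sum>a\<in>insert 0 S. \<Sum>e\<le>w. Res S a * (g e S * T a ^ e))"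
      using g(2) S by (simp add: sum_distrib_left)
    also have "\<dots> = (\<Sum>e\<le>w. \<Sum>a\<in>insert 0 S. Res S a * (g e S * T a ^ e))" by (rule sum.swap)
    also have "\<dots> = (\<Sum>e\<le>w. g e S * Es e S)" unfolding Es_def sum_distrib_left
      by (intro sum.cong) (auto simp: algebra_simps)
    finally show ?thesis .
  qed
  ultimately show ?thesis by (rule gq_cong)
qed


definition Dl :: "nat \<Rightarrow> nat \<Rightarrow> rat" where "Dl k a = T (a + 1) ^ k - 2 * T a ^ k + T (a - 1) ^ k"
definition uu :: "nat \<Rightarrow> nat \<Rightarrow> rat" where "uu r a = (of_nat a + 1) ^ r + (- of_nat a) ^ r"

lemma uu_rec: "uu (Suc (Suc r)) a = uu (Suc r) a + 2 * T a * uu r a"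
proof -
  define s :: rat where "s = of_nat a"
  have "2 * T a = s * (s + 1)" unfolding T_def s_def by simp
  then have "uu (Suc (Suc r)) a - uu (Suc r) a - 2 * T a * uu r a
      = (s + 1) ^ r * ((s + 1) * (s + 1) - (s + 1) - s * (s + 1)) + (- s) ^ r * (s * s + s - s * (s + 1))"
    unfolding uu_def s_def[symmetric] by (simp add: algebra_simps)
  also have "\<dots> = 0" by (simp add: algebra_simps)
  finally show ?thesis by simp
qed

lemma uu_gen: "gen (r div 2) (\<lambda>S a. uu r a)"
proof (induction r rule: less_induct)
  case (less r)
  show ?case
  proof (cases r)
    case 0
    have "gen 0 (\<lambda>S a. uu 0 a)" by (rule gen_cong[OF gen_lift[OF gq_const[of 2]]]) (simp add: uu_def)
    then show ?thesis using 0 by simp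
  next
    case (Suc r1)
    show ?thesis
    proof (cases r1)
      case 0
      have "gen 0 (\<lambda>S a. uu 1 a)" by (rule gen_cong[OF gen_lift[OF gq_const[of 1]]]) (simp add: uu_def)
      then show ?thesis using 0 Suc by simp
    next
      case (Suc r2)
      have A: "gen (r div 2) (\<lambda>S a. uu (Suc r2) a)"
        by (rule gen_mono[OF less[of "Suc r2"]]) (use Suc \<open>r = Suc r1\<close> in auto)
      have "gen (1 + r2 div 2) (\<lambda>S a. (2 * T a) * uu r2 a)"
        by (rule gen_mult[OF gen_smul[OF gen_T] less[of r2]]) (use Suc \<open>r = Suc r1\<close> in auto)
      then have B: "gen (r div 2) (\<lambda>S a. (2 * T a) * uu r2 a)" using Suc \<open>r = Suc r1\<close> by simp
      show ?thesis
        by (rule gen_cong[OF gen_add[OF A B]]) (simp add: Suc \<open>r = Suc r1\<close> uu_rec)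
    qed
  qed
qed

lemma T_up: "T (a + 1) = (of_nat a + 1) + T a" unfolding T_def by (simp add: field_simps)
lemma T_down: "T (a - 1) = (- of_nat a) + T a"
  by (cases a) (simp_all add: T_def field_simps)

lemma Dl_expand: "Dl k a = (\<Sum>r\<in>{1..k}. of_nat (k choose r) * uu r a * T a ^ (k - r))"
proof -
  have u: "T (a + 1) ^ k = (\<Sum>r\<le>k. of_nat (k choose r) * (of_nat a + 1) ^ r * T a ^ (k - r))"
    unfolding T_up by (rule binomial_ring)
  have d: "T (a - 1) ^ k = (\<Sum>r\<le>k. of_nat (k choose r) * (- of_nat a) ^ r * T a ^ (k - r))"
    unfolding T_down by (rule binomial_ring)
  have "T (a + 1) ^ k + T (a - 1) ^ k = (\<Sum>r\<le>k. of_nat (k choose r) * uu r a * T a ^ (k - r))"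
    unfolding u d uu_def by (simp add: sum.distrib[symmetric] algebra_simps)
  also have "{..k} = insert 0 {1..k}" by auto
  also have "(\<Sum>r\<in>insert 0 {1..k}. of_nat (k choose r) * uu r a * T a ^ (k - r))
      = 2 * T a ^ k + (\<Sum>r\<in>{1..k}. of_nat (k choose r) * uu r a * T a ^ (k - r))"
    by (simp add: uu_def)
  finally show ?thesis unfolding Dl_def by simp
qed

lemma Dl_gen: "1 \<le> k \<Longrightarrow> gen (k - 1) (\<lambda>S a. Dl k a)"
proof -
  assume k: "1 \<le> k"
  have "gen (k - 1) (\<lambda>S a. \<Sum>r\<in>{1..k}. of_nat (k choose r) * (uu r a * T a ^ (k - r)))"
  proof (rule gen_sum)
    fix r assume r: "r \<in> {1..k}"
    have "gen (r div 2 + (k - r)) (\<lambda>S a. uu r a * T a ^ (k - r))"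
      by (rule gen_mult[OF uu_gen gen_pow[OF gen_T]])
    then have "gen (k - 1) (\<lambda>S a. uu r a * T a ^ (k - r))"
      by (rule gen_mono) (use r in auto)
    then show "gen (k - 1) (\<lambda>S a. of_nat (k choose r) * (uu r a * T a ^ (k - r)))" by (rule gen_smul)
  qed simp
  then show ?thesis by (rule gen_cong) (simp add: Dl_expand mult.assoc)
qed

definition Pn :: "nat list \<Rightarrow> nat set \<Rightarrow> nat \<Rightarrow> rat" where
  "Pn nu S a = prod_list (map (\<lambda>k. Qs k S + Dl k a) nu)"

lemma Pn_gen: "\<forall>k\<in>set nu. 1 \<le> k \<Longrightarrow> gen (sum_list nu) (Pn nu)"
proof (induction nu)
  case Nil
  have "gen 0 (Pn [])" by (rule gen_cong[OF gen_lift[OF gq_const[of 1]]]) (simp add: Pn_def)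
  then show ?case by simp
next
  case (Cons k nu)
  have A: "gen k (\<lambda>S a. Qs k S + Dl k a)"
    by (rule gen_add[OF gen_lift[OF gq_Q] gen_mono[OF Dl_gen]]) (use Cons in auto)
  have "gen (k + sum_list nu) (\<lambda>S a. (Qs k S + Dl k a) * Pn nu S a)"
    by (rule gen_mult[OF A Cons.IH]) (use Cons in auto)
  then have "gen (k + sum_list nu) (Pn (k # nu))" by (rule gen_cong) (simp add: Pn_def)
  then show ?case by simp
qed

lemma diff_gen: "\<forall>k\<in>set nu. 1 \<le> k \<Longrightarrow> gen (sum_list nu - 1) (\<lambda>S a. Pn nu S a - Pq nu S)"
proof (induction nu)
  case Nil
  show ?case by (rule gen_cong[OF gen_zero]) (simp add: Pn_def Pq_def)
next
  case (Cons k nu)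
  have k: "1 \<le> k" using Cons by auto
  have eq: "Pn (k # nu) S a - Pq (k # nu) S = Qs k S * (Pn nu S a - Pq nu S) + Dl k a * Pn nu S a" for S a
    by (simp add: Pn_def Pq_def algebra_simps)
  show ?case
  proof (cases "nu = []")
    case True
    have "gen (k - 1) (\<lambda>S a. Pn (k # nu) S a - Pq (k # nu) S)"
      by (rule gen_cong[OF Dl_gen[OF k]]) (simp add: True Pn_def Pq_def)
    then show ?thesis using True by simp
  next
    case False
    have pos: "\<forall>x\<in>set nu. 1 \<le> x" using Cons by auto
    have s1: "1 \<le> sum_list nu" using False pos by (cases nu) auto
    have A: "gen (k + (sum_list nu - 1)) (\<lambda>S a. Qs k S * (Pn nu S a - Pq nu S))"
      by (rule gen_mult[OF gen_lift[OF gq_Q[OF k]] Cons.IH[OF pos]])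
    have B: "gen (k - 1 + sum_list nu) (\<lambda>S a. Dl k a * Pn nu S a)"
      by (rule gen_mult[OF Dl_gen[OF k] Pn_gen[OF pos]])
    have "gen (sum_list (k # nu) - 1) (\<lambda>S a. Qs k S * (Pn nu S a - Pq nu S) + Dl k a * Pn nu S a)"
      by (rule gen_add; rule gen_mono[OF A] gen_mono[OF B]) (use s1 k in auto)
    then show ?thesis by (rule gen_cong) (simp add: eq)
  qed
qed

lemma Qs_step:
  assumes S: "S \<in> U" and a: "a \<in> insert 0 S" "a + 1 \<notin> S" and k: "1 \<le> k"
  shows "Qs k (insert (a + 1) (S - {a})) = Qs k S + Dl k a"
proof -
  have fS: "finite S" and S0: "0 \<notin> S" using S unfolding U_def by auto
  show ?thesis
  proof (cases "a = 0")
    case True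
    have "S - {a} = S" using S0 True by auto
    then have "Qs k (insert (a + 1) (S - {a})) = (T 1 ^ k - T 0 ^ k) + Qs k S"
      unfolding Qs_def using fS a True by simp
    moreover have "T 1 = 1" "T 0 = 0" unfolding T_def by simp_all
    ultimately show ?thesis unfolding Dl_def using True k by simp
  next
    case False
    then have aS: "a \<in> S" using a by auto
    have "Qs k S = (T a ^ k - T (a - 1) ^ k) + Qs k (S - {a})"
      unfolding Qs_def using sum.remove[OF fS aS] .
    moreover have "Qs k (insert (a + 1) (S - {a})) = (T (a + 1) ^ k - T (a + 1 - 1) ^ k) + Qs k (S - {a})"
      unfolding Qs_def using fS a by simp
    ultimately show ?thesis unfolding Dl_def by simp
  qed
qed

lemma Pq_step:
  assumes "S \<in> U" "a \<in> insert 0 S" "a + 1 \<notin> S" "\<forall>k\<in>set nu. 1 \<le> k"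
  shows "Pq nu (insert (a + 1) (S - {a})) = Pn nu S a"
  unfolding Pq_def Pn_def using Qs_step[OF assms(1-3)] assms(4)
  by (intro arg_cong[of _ _ prod_list] map_cong) auto

lemma prod_nth_list: "(\<Prod>j<length d. f (d ! j)) = prod_list (map f d)"
  by (induction d) (simp_all del: prod.lessThan_Suc add: prod.lessThan_Suc_shift)

lemma qpart_Pq:
  assumes "strict_partition l" "int_partition d"
  shows "q_part d l = Pq d (set l)"
proof -
  have "q_part d l = prod_list (map (\<lambda>k. q k l) d)" unfolding Defs.q_part_def by (rule prod_nth_list)
  also have "\<dots> = prod_list (map (\<lambda>k. Qs k (set l)) d)"
    using assms q_Qs unfolding Defs.int_partition_def by (intro arg_cong[of _ _ prod_list] map_cong) (auto simp: Suc_le_eq)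
  finally show ?thesis unfolding Pq_def .
qed

lemma set_U: "strict_partition l \<Longrightarrow> set l \<in> U"
  unfolding U_def Defs.strict_partition_def by auto

theorem theorem3p6:
  fixes nu :: "nat list"
  assumes "int_partition nu"
  shows "\<exists>xi :: nat list \<Rightarrow> rat. \<forall>lam. strict_partition lam \<longrightarrow>
           Dop (\<lambda>mu. q_part nu mu / H mu) lam
         = (\<Sum>delta\<in>{delta. int_partition delta \<and> int (sum_list delta) \<le> int (sum_list nu) - 1}.
              xi delta * (q_part delta lam / H lam))"
proof -
  have pos: "\<forall>k\<in>set nu. 1 \<le> k" using assms unfolding Defs.int_partition_def by (auto simp: Suc_le_eq)
  define w where "w = sum_list nu - 1"
  have "genq w (\<lambda>S. \<Sum>a\<in>insert 0 S. Res S a * (Pn nu S a - Pq nu S))"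
    unfolding w_def by (rule gen_sumRes[OF diff_gen[OF pos]])
  then obtain xi where xi: "\<forall>S\<in>U. (\<Sum>a\<in>insert 0 S. Res S a * (Pn nu S a - Pq nu S)) = (\<Sum>d\<in>Parts w. xi d * Pq d S)"
    unfolding genq_def by blast
  define xi' where "xi' d = (if nu = [] then 0 else xi d)" for d
  show ?thesis
  proof (intro exI[of _ xi'] allI impI)
    fix lam assume sp: "strict_partition lam"
    define S where "S = set lam"
    have SU: "S \<in> U" unfolding S_def by (rule set_U[OF sp])
    have fS: "finite S" and S0: "0 \<notin> S" using SU unfolding U_def by auto
    have HS: "0 < Hs S" by (rule Hs_pos[OF fS])
    define A' where "A' = {a \<in> insert 0 S. a + 1 \<notin> S}"
    have "Dop (\<lambda>mu. q_part nu mu / H mu) lam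
        = (\<Sum>a\<in>A'. (if a = 0 then 1 else 2) * (Pq nu (insert (a + 1) (S - {a})) / Hs (insert (a + 1) (S - {a})))) - Pq nu S / Hs S"
      unfolding A'_def S_def
      by (rule Dop_set[OF sp]) (simp add: qpart_Pq[OF _ assms] H_Hs)
    also have "(\<Sum>a\<in>A'. (if a = 0 then 1 else 2) * (Pq nu (insert (a + 1) (S - {a})) / Hs (insert (a + 1) (S - {a}))))
        = (\<Sum>a\<in>A'. Res S a * Pn nu S a / Hs S)"
    proof (rule sum.cong)
      fix a assume a: "a \<in> A'"
      have r: "Res S a = (if a = 0 then 1 else 2) * Hs S / Hs (insert (a + 1) (S - {a}))"
        using Res_weight[OF fS S0] a unfolding A'_def by auto
      have p: "Pq nu (insert (a + 1) (S - {a})) = Pn nu S a" using Pq_step[OF SU _ _ pos] a unfolding A'_def by auto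
      show "(if a = 0 then 1 else 2) * (Pq nu (insert (a + 1) (S - {a})) / Hs (insert (a + 1) (S - {a}))) = Res S a * Pn nu S a / Hs S"
        unfolding r p using HS by simp
    qed simp
    also have "(\<Sum>a\<in>A'. Res S a * Pn nu S a / Hs S) = (\<Sum>a\<in>insert 0 S. Res S a * Pn nu S a / Hs S)"
    proof (rule sum.mono_neutral_left)
      show "\<forall>a\<in>insert 0 S - A'. Res S a * Pn nu S a / Hs S = 0"
        using Res_zero[OF fS] unfolding A'_def by auto
    qed (use fS in \<open>auto simp: A'_def\<close>)
    also have "Pq nu S / Hs S = (\<Sum>a\<in>insert 0 S. Res S a * Pq nu S / Hs S)"
      using Res_sum1[OF SU] by (simp add: sum_distrib_right[symmetric] sum_divide_distrib[symmetric])
    also have "(\<Sum>a\<in>insert 0 S. Res S a * Pn nu S a / Hs S) - (\<Sum>a\<in>insert 0 S. Res S a * Pq nu S / Hs S)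
        = (\<Sum>a\<in>insert 0 S. Res S a * Pn nu S a / Hs S - Res S a * Pq nu S / Hs S)"
      by (rule sum_subtractf[symmetric])
    also have "\<dots> = (\<Sum>a\<in>insert 0 S. Res S a * (Pn nu S a - Pq nu S) / Hs S)"
      by (intro sum.cong) (simp_all add: right_diff_distrib diff_divide_distrib)
    also have "\<dots> = (\<Sum>a\<in>insert 0 S. Res S a * (Pn nu S a - Pq nu S)) / Hs S"
      by (rule sum_divide_distrib[symmetric])
    finally have "Dop (\<lambda>mu. q_part nu mu / H mu) lam = (\<Sum>a\<in>insert 0 S. Res S a * (Pn nu S a - Pq nu S)) / Hs S" .
    also have "\<dots> = (\<Sum>d\<in>Parts w. xi d * Pq d S) / Hs S" using xi SU by simp
    finally have D: "Dop (\<lambda>mu. q_part nu mu / H mu) lam = (\<Sum>d\<in>Parts w. xi d * Pq d S) / Hs S" .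
    show "Dop (\<lambda>mu. q_part nu mu / H mu) lam
         = (\<Sum>delta\<in>{delta. int_partition delta \<and> int (sum_list delta) \<le> int (sum_list nu) - 1}.
              xi' delta * (q_part delta lam / H lam))"
    proof (cases "nu = []")
      case True
      have "(\<Sum>a\<in>insert 0 S. Res S a * (Pn nu S a - Pq nu S)) = 0" using True by (simp add: Pn_def Pq_def)
      then have "Dop (\<lambda>mu. q_part nu mu / H mu) lam = 0"
        using \<open>Dop (\<lambda>mu. q_part nu mu / H mu) lam = (\<Sum>a\<in>insert 0 S. Res S a * (Pn nu S a - Pq nu S)) / Hs S\<close> by simp
      then show ?thesis unfolding xi'_def using True by simp
    next
      case False
      then have "1 \<le> sum_list nu" using pos by (cases nu) auto
      then have set_eq: "{delta. int_partition delta \<and> int (sum_list delta) \<le> int (sum_list nu) - 1} = Parts w"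
        unfolding Parts_def w_def by auto
      have "(\<Sum>delta\<in>Parts w. xi' delta * (q_part delta lam / H lam)) = (\<Sum>d\<in>Parts w. xi d * Pq d S) / Hs S"
        unfolding sum_divide_distrib
        by (intro sum.cong) (auto simp: xi'_def False qpart_Pq[OF sp] H_Hs[OF sp] S_def Parts_def)
      then show ?thesis unfolding set_eq D by (rule sym)
    qed
  qed
qed


end
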